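(* Let $E$ be a complex Banach lattice and let $A: E \supseteq D(A) \to E$ be a densely defined, closed, real linear operator. Let $u \in E_+$ and let $\varphi \in E'_+$ be strictly positive. Assume: (Domination) there are integers $m_1, m_2 \ge 0$ such that $D(A^{m_1}) \subseteq E_u$ and $D((A')^{m_2}) \subseteq (E')_\varphi$; (Spectral) there is $\lambda_0 \in \mathbb{R}$ which is a geometrically simple eigenvalue of $A$ and an eigenvalue of $A'$, such that $\ker(\lambda_0 - A)$ is spanned by a vector $v$ with $v \succeq u$, and $\ker(\lambda_0 - A')$ contains an element $\psi$ with $\psi \succeq \varphi$. Let $\mu_0, \mu$ be real numbers in $\rho(A)$. (a) If $R(\mu_0,A) \succeq -u\otimes\varphi$ and $\mu \le \mu_0$, then $R(\mu,A)\succeq -u\otimes\varphi$, and moreover $R(\mu,A)^n \succeq -u\otimes\varphi$ for all $n\in\mathbb{N}$. (b) If $R(\mu_0,A) \preceq u\otimes\varphi$ and $\mu \ge \mu_0$, then $R(\mu,A)\preceq u\otimes\varphi$, and moreover $(-1)^{n-1}R(\mu,A)^n \preceq u\otimes\varphi$ for all $n\in\mathbb{N}$.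
   Context: $E_{\mathbb{R}}$ denotes the real part of the complex Banach lattice $E$; $E'$ is the dual Banach lattice. A linear operator $A$ is real if $D(A) = (D(A)\cap E_{\mathbb{R}}) + i(D(A)\cap E_{\mathbb{R}})$ and $A$ maps $D(A)\cap E_{\mathbb{R}}$ into $E_{\mathbb{R}}$. $R(\mu,A) = (\mu - A)^{-1}$. For real vectors $u,v$, $v \succeq u$ means $v \ge cu$ for some $c>0$. For bounded real operators $T,S$, $T\succeq S$ (equivalently $S\preceq T$) means $T - cS$ is positive for some $c>0$. $u\otimes\varphi$ is the operator $f\mapsto\langle\varphi,f\rangle u$. $\varphi$ strictly positive: $\langle\varphi,f\rangle>0$ for all $0\ne f\in E_+$. $E_u = \{x : |x|\le cu \text{ for some } c\ge0\}$ and $(E')_\varphi = \{x'\in E' : |x'|\le c\varphi \text{ for some } c \ge 0\}$. Geometrically simple: one-dimensional eigenspace. *)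

theory Defs
  imports "HOL-Analysis.Analysis"
begin

text \<open>
A complex Banach lattice E is (by definition) the complexification of a real Banach
lattice E_R.  The complex Banach lattice
E is modelled as 'a \<times> 'a, the pair (x, y) standing for x + i y, with the product
topology (equivalent to the topology of any complexification norm).
\<close>

definition labs :: "'a::{ordered_real_vector,lattice} \<Rightarrow> 'a" where
  "labs x = sup x (- x)"

definition banach_lattice :: "'a::{banach,ordered_real_vector,lattice} itself \<Rightarrow> bool" where
  "banach_lattice _ \<longleftrightarrow> (\<forall>x y::'a. labs x \<le> labs y \<longrightarrow> norm x \<le> norm y)"

definition cscale :: "complex \<Rightarrow> 'a::real_vector \<times> 'a \<Rightarrow> 'a \<times> 'a" where
  "cscale c z = (Re c *\<^sub>R fst z - Im c *\<^sub>R snd z, Re c *\<^sub>R snd z + Im c *\<^sub>R fst z)"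

definition complex_subspace :: "('a::real_vector \<times> 'a) set \<Rightarrow> bool" where
  "complex_subspace D \<longleftrightarrow> 0 \<in> D \<and> (\<forall>x\<in>D. \<forall>y\<in>D. x + y \<in> D) \<and>
     (\<forall>c. \<forall>x\<in>D. cscale c x \<in> D)"

definition linear_op :: "('a::real_vector \<times> 'a) set \<Rightarrow> ('a \<times> 'a \<Rightarrow> 'a \<times> 'a) \<Rightarrow> bool" where
  "linear_op D A \<longleftrightarrow> complex_subspace D \<and> (\<forall>x\<in>D. \<forall>y\<in>D. A (x + y) = A x + A y) \<and>
     (\<forall>c. \<forall>x\<in>D. A (cscale c x) = cscale c (A x))"

definition closed_op :: "('a::real_normed_vector \<times> 'a) set \<Rightarrow> ('a \<times> 'a \<Rightarrow> 'a \<times> 'a) \<Rightarrow> bool" where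
  "closed_op D A \<longleftrightarrow> closed {(x, A x) | x. x \<in> D}"

definition densely_defined :: "('a::real_normed_vector \<times> 'a) set \<Rightarrow> bool" where
  "densely_defined D \<longleftrightarrow> closure D = UNIV"

text \<open>Real operator: D = (D \<inter> E_R) + i (D \<inter> E_R) and A maps D \<inter> E_R into E_R.\<close>
definition real_op :: "('a::real_vector \<times> 'a) set \<Rightarrow> ('a \<times> 'a \<Rightarrow> 'a \<times> 'a) \<Rightarrow> bool" where
  "real_op D A \<longleftrightarrow> D = {(x, y). (x, 0) \<in> D \<and> (y, 0) \<in> D} \<and>
     (\<forall>x. (x, 0) \<in> D \<longrightarrow> snd (A (x, 0)) = 0)"

fun pow_dom :: "'b set \<Rightarrow> 'b set \<Rightarrow> ('b \<Rightarrow> 'b) \<Rightarrow> nat \<Rightarrow> 'b set" where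
  "pow_dom X D A 0 = X"
| "pow_dom X D A (Suc m) = {x \<in> D. A x \<in> pow_dom X D A m}"

text \<open>Principal ideal E_u (componentwise, equivalent to |z| \<le> c u for the complex modulus).\<close>
definition ideal_gen :: "'a::{ordered_real_vector,lattice} \<Rightarrow> ('a \<times> 'a) set" where
  "ideal_gen u = {(x, y). \<exists>c\<ge>0. labs x \<le> c *\<^sub>R u \<and> labs y \<le> c *\<^sub>R u}"

definition cdual :: "('a::real_normed_vector \<times> 'a \<Rightarrow> complex) set" where
  "cdual = {f. (\<forall>x y. f (x + y) = f x + f y) \<and> (\<forall>c x. f (cscale c x) = c * f x)
              \<and> continuous_on UNIV f}"

definition dual_real :: "('a::real_vector \<times> 'a \<Rightarrow> complex) \<Rightarrow> bool" where
  "dual_real f \<longleftrightarrow> (\<forall>x. Im (f (x, 0)) = 0)"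

definition dual_pos :: "('a::ordered_real_vector \<times> 'a \<Rightarrow> complex) \<Rightarrow> bool" where
  "dual_pos f \<longleftrightarrow> dual_real f \<and> (\<forall>x\<ge>0. Re (f (x, 0)) \<ge> 0)"

definition strictly_positive :: "('a::ordered_real_vector \<times> 'a \<Rightarrow> complex) \<Rightarrow> bool" where
  "strictly_positive f \<longleftrightarrow> dual_real f \<and> (\<forall>x. 0 \<le> x \<and> x \<noteq> 0 \<longrightarrow> Re (f (x, 0)) > 0)"

text \<open>Principal ideal (E')_\<phi> in the dual lattice, written out:
  |x'| \<le> c \<phi> for some c (equivalently |x'(f)| \<le> c \<phi>(|f|) for all real f, up to the constant).\<close>
definition dual_ideal_gen :: "('a::{real_normed_vector,ordered_real_vector,lattice} \<times> 'a \<Rightarrow> complex)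
    \<Rightarrow> ('a \<times> 'a \<Rightarrow> complex) set" where
  "dual_ideal_gen \<phi> = {g \<in> cdual. \<exists>c\<ge>0. \<forall>x. cmod (g (x, 0)) \<le> c * Re (\<phi> (labs x, 0))}"

definition adj_dom :: "('a::real_normed_vector \<times> 'a) set \<Rightarrow> ('a \<times> 'a \<Rightarrow> 'a \<times> 'a)
    \<Rightarrow> ('a \<times> 'a \<Rightarrow> complex) set" where
  "adj_dom D A = {x' \<in> cdual. \<exists>y' \<in> cdual. \<forall>f\<in>D. x' (A f) = y' f}"

definition adj :: "('a::real_normed_vector \<times> 'a) set \<Rightarrow> ('a \<times> 'a \<Rightarrow> 'a \<times> 'a)
    \<Rightarrow> ('a \<times> 'a \<Rightarrow> complex) \<Rightarrow> ('a \<times> 'a \<Rightarrow> complex)" where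
  "adj D A x' = (THE y'. y' \<in> cdual \<and> (\<forall>f\<in>D. x' (A f) = y' f))"

definition resolvent :: "('a::real_vector \<times> 'a) set \<Rightarrow> ('a \<times> 'a \<Rightarrow> 'a \<times> 'a) \<Rightarrow> complex
    \<Rightarrow> 'a \<times> 'a \<Rightarrow> 'a \<times> 'a" where
  "resolvent D A \<mu> f = (THE g. g \<in> D \<and> cscale \<mu> g - A g = f)"

definition resolvent_set :: "('a::real_normed_vector \<times> 'a) set \<Rightarrow> ('a \<times> 'a \<Rightarrow> 'a \<times> 'a)
    \<Rightarrow> complex set" where
  "resolvent_set D A = {\<mu>. bij_betw (\<lambda>g. cscale \<mu> g - A g) D UNIV \<and>
                              continuous_on UNIV (resolvent D A \<mu>)}"

definition vec_succeq :: "'a::ordered_real_vector \<Rightarrow> 'a \<Rightarrow> bool" where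
  "vec_succeq v u \<longleftrightarrow> (\<exists>c>0. c *\<^sub>R u \<le> v)"

definition dual_succeq :: "('a::ordered_real_vector \<times> 'a \<Rightarrow> complex) \<Rightarrow> ('a \<times> 'a \<Rightarrow> complex) \<Rightarrow> bool" where
  "dual_succeq \<psi> \<phi> \<longleftrightarrow> (\<exists>c>0. dual_pos (\<lambda>f. \<psi> f - complex_of_real c * \<phi> f))"

definition pos_op :: "('a::ordered_real_vector \<times> 'a \<Rightarrow> 'a \<times> 'a) \<Rightarrow> bool" where
  "pos_op T \<longleftrightarrow> (\<forall>x\<ge>0. snd (T (x, 0)) = 0 \<and> fst (T (x, 0)) \<ge> 0)"

definition op_succeq :: "('a::ordered_real_vector \<times> 'a \<Rightarrow> 'a \<times> 'a) \<Rightarrow> ('a \<times> 'a \<Rightarrow> 'a \<times> 'a) \<Rightarrow> bool" where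
  "op_succeq T S \<longleftrightarrow> (\<exists>c>0. pos_op (\<lambda>f. T f - c *\<^sub>R S f))"

definition tensor :: "'a::real_vector \<Rightarrow> ('a \<times> 'a \<Rightarrow> complex) \<Rightarrow> 'a \<times> 'a \<Rightarrow> 'a \<times> 'a" where
  "tensor u \<phi> f = cscale (\<phi> f) (u, 0)"

definition eigenspace_op :: "'b set \<Rightarrow> ('b \<Rightarrow> 'b) \<Rightarrow> (complex \<Rightarrow> 'b \<Rightarrow> 'b) \<Rightarrow> complex \<Rightarrow> 'b set" where
  "eigenspace_op D A sc lam = {x \<in> D. sc lam x = A x}"

end

theory Submission
  imports Defs "HOL-Analysis.Analysis"
begin


definition hb_ok :: "'a::real_normed_vector \<Rightarrow> ('a \<times> real) set \<Rightarrow> bool" where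
  "hb_ok w G \<longleftrightarrow> (0,0) \<in> G \<and> (\<forall>p\<in>G. \<forall>q\<in>G. p + q \<in> G) \<and> (\<forall>p\<in>G. \<forall>r. r *\<^sub>R p \<in> G)
     \<and> (w, norm w) \<in> G \<and> (\<forall>x a. (x,a) \<in> G \<longrightarrow> a \<le> norm x)"

lemma hb_fun:
  assumes "hb_ok w G" "(x,a) \<in> G" "(x,b) \<in> G" shows "a = b"
proof -
  have "(x,a) + (-1) *\<^sub>R (x,b) \<in> G" using assms unfolding hb_ok_def by blast
  then have "(0, a - b) \<in> G" by simp
  then have 1: "a - b \<le> 0" using assms unfolding hb_ok_def by fastforce
  have "(x,b) + (-1) *\<^sub>R (x,a) \<in> G" using assms unfolding hb_ok_def by blast
  then have "(0, b - a) \<in> G" by simp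
  then have "b - a \<le> 0" using assms unfolding hb_ok_def by fastforce
  with 1 show ?thesis by simp
qed

lemma hb_extend:
  fixes w :: "'a::real_normed_vector"
  assumes ok: "hb_ok w M" and nz: "\<forall>a. (z,a) \<notin> M"
  shows "\<exists>M'. hb_ok w M' \<and> M \<subseteq> M' \<and> M' \<noteq> M"
proof -
  define S where "S = {b - norm (y - z) | y b. (y,b) \<in> M}"
  define c where "c = Sup S"
  have M0: "(0,0) \<in> M" using ok unfolding hb_ok_def by blast
  have Madd: "\<And>p q. p \<in> M \<Longrightarrow> q \<in> M \<Longrightarrow> p + q \<in> M" using ok unfolding hb_ok_def by blast
  have Msc: "\<And>p r. p \<in> M \<Longrightarrow> r *\<^sub>R p \<in> M" using ok unfolding hb_ok_def by blast
  have Mb: "\<And>x a. (x,a) \<in> M \<Longrightarrow> a \<le> norm x" using ok unfolding hb_ok_def by blast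
  have key: "b - norm (y - z) \<le> norm (y' + z) - b'" if "(y,b) \<in> M" "(y',b') \<in> M" for y b y' b'
  proof -
    have "(y + y', b + b') \<in> M" using Madd[OF that] by simp
    then have "b + b' \<le> norm (y + y')" by (rule Mb)
    also have "norm (y + y') \<le> norm (y - z) + norm (y' + z)"
      using norm_triangle_ineq[of "y - z" "y' + z"] by simp
    finally show ?thesis by simp
  qed
  have Sne: "S \<noteq> {}" using M0 unfolding S_def by blast
  have Sbdd: "bdd_above S" unfolding S_def bdd_above_def using key[OF _ M0] by fastforce
  have c_ge: "b - norm (y - z) \<le> c" if "(y,b) \<in> M" for y b
    unfolding c_def by (rule cSup_upper[OF _ Sbdd]) (use that S_def in blast)
  have c_le: "c \<le> norm (y' + z) - b'" if "(y',b') \<in> M" for y' b'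
    unfolding c_def by (rule cSup_least[OF Sne]) (use key that S_def in blast)
  define M' where "M' = {(x + t *\<^sub>R z, a + t * c) | x a t. (x,a) \<in> M}"
  have M'I: "(x + t *\<^sub>R z, a + t * c) \<in> M'" if "(x,a) \<in> M" for x a t
    unfolding M'_def using that by blast
  have "hb_ok w M'"
    unfolding hb_ok_def
  proof (intro conjI ballI allI impI)
    show "(0,0) \<in> M'" using M'I[OF M0, of 0] by simp
    have "(w, norm w) \<in> M" using ok unfolding hb_ok_def by blast
    from M'I[OF this, of 0] show "(w, norm w) \<in> M'" by simp
  next
    fix p q assume "p \<in> M'" "q \<in> M'"
    then obtain x a t x' a' t' where p: "p = (x + t *\<^sub>R z, a + t * c)" "(x,a) \<in> M"
      and q: "q = (x' + t' *\<^sub>R z, a' + t' * c)" "(x',a') \<in> M" unfolding M'_def by blast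
    have "(x + x', a + a') \<in> M" using Madd[OF p(2) q(2)] by simp
    moreover have "p + q = ((x + x') + (t + t') *\<^sub>R z, (a + a') + (t + t') * c)"
      using p q by (simp add: algebra_simps scaleR_add_left)
    ultimately show "p + q \<in> M'" using M'I by metis
  next
    fix p r assume "p \<in> M'"
    then obtain x a t where p: "p = (x + t *\<^sub>R z, a + t * c)" "(x,a) \<in> M" unfolding M'_def by blast
    have "(r *\<^sub>R x, r * a) \<in> M" using Msc[OF p(2), of r] by simp
    moreover have "r *\<^sub>R p = (r *\<^sub>R x + (r * t) *\<^sub>R z, r * a + (r * t) * c)"
      using p by (simp add: algebra_simps)
    ultimately show "r *\<^sub>R p \<in> M'" using M'I by metis
  next
    fix y b assume "(y,b) \<in> M'"
    then obtain x a t where p: "y = x + t *\<^sub>R z" "b = a + t * c" "(x,a) \<in> M" unfolding M'_def by blast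
    show "b \<le> norm y"
    proof (cases "t = 0")
      case True then show ?thesis using p Mb by simp
    next
      case False
      have xa: "((1/\<bar>t\<bar>) *\<^sub>R x, a / \<bar>t\<bar>) \<in> M" using Msc[OF p(3), of "1/\<bar>t\<bar>"] by simp
      show ?thesis
      proof (cases "t > 0")
        case True
        have "c \<le> norm ((1/t) *\<^sub>R x + z) - a / t" using c_le[OF xa] True by simp
        then have "t * c \<le> t * (norm ((1/t) *\<^sub>R x + z) - a / t)" using True by (simp add: mult_left_mono)
        also have "\<dots> = norm (x + t *\<^sub>R z) - a"
        proof -
          have "t * norm ((1/t) *\<^sub>R x + z) = norm (t *\<^sub>R ((1/t) *\<^sub>R x + z))" using True by simp
          also have "t *\<^sub>R ((1/t) *\<^sub>R x + z) = x + t *\<^sub>R z" using True by (simp add: scaleR_add_right)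
          finally show ?thesis using True by (simp add: right_diff_distrib)
        qed
        finally show ?thesis using p by simp
      next
        case False
        with \<open>t \<noteq> 0\<close> have tn: "t < 0" by simp
        have "a / (-t) - norm ((1/(-t)) *\<^sub>R x - z) \<le> c" using c_ge[OF xa] tn by simp
        then have "(-t) * (a / (-t) - norm ((1/(-t)) *\<^sub>R x - z)) \<le> (-t) * c" using tn by (simp add: mult_left_mono)
        moreover have "(-t) * (a / (-t) - norm ((1/(-t)) *\<^sub>R x - z)) = a - norm (x + t *\<^sub>R z)"
        proof -
          have "(-t) * norm ((1/(-t)) *\<^sub>R x - z) = norm ((-t) *\<^sub>R ((1/(-t)) *\<^sub>R x - z))" using tn by simp
          also have "(-t) *\<^sub>R ((1/(-t)) *\<^sub>R x - z) = x + t *\<^sub>R z" using tn by (simp add: scaleR_diff_right)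
          finally show ?thesis using tn by (simp add: right_diff_distrib)
        qed
        ultimately show ?thesis using p by simp
      qed
    qed
  qed
  moreover have "M \<subseteq> M'" using M'I[of _ _ 0] by auto
  moreover have "(z, c) \<in> M'" using M'I[OF M0, of 1] by simp
  ultimately show ?thesis using nz by blast
qed

lemma hahn_banach_norming:
  fixes w :: "'a::real_normed_vector"
  shows "\<exists>l. bounded_linear l \<and> (\<forall>x. \<bar>l x\<bar> \<le> norm x) \<and> l w = norm w"
proof -
  define A where "A = {G. hb_ok w G}"
  define G0 where "G0 = {(r *\<^sub>R w, r * norm w) | r. True}"
  have G0ok: "hb_ok w G0" unfolding hb_ok_def G0_def
  proof (intro conjI ballI allI impI)
    show "(0::'a, 0::real) \<in> {(r *\<^sub>R w, r * norm w) |r. True}" by (rule CollectI, rule exI[of _ 0]) simp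
    show "(w, norm w) \<in> {(r *\<^sub>R w, r * norm w) |r. True}" by (rule CollectI, rule exI[of _ 1]) simp
  next
    fix p q assume "p \<in> {(r *\<^sub>R w, r * norm w) |r. True}" "q \<in> {(r *\<^sub>R w, r * norm w) |r. True}"
    then obtain r s where "p = (r *\<^sub>R w, r * norm w)" "q = (s *\<^sub>R w, s * norm w)" by blast
    then have "p + q = ((r + s) *\<^sub>R w, (r + s) * norm w)" by (simp add: algebra_simps scaleR_add_left)
    then show "p + q \<in> {(r *\<^sub>R w, r * norm w) |r. True}" by blast
  next
    fix p r' assume "p \<in> {(r *\<^sub>R w, r * norm w) |r. True}"
    then obtain r where "p = (r *\<^sub>R w, r * norm w)" by blast
    then have "r' *\<^sub>R p = ((r' * r) *\<^sub>R w, (r' * r) * norm w)" by simp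
    then show "r' *\<^sub>R p \<in> {(r *\<^sub>R w, r * norm w) |r. True}" by blast
  next
    fix x a assume "(x, a) \<in> {(r *\<^sub>R w, r * norm w) |r. True}"
    then obtain r where "x = r *\<^sub>R w" "a = r * norm w" by blast
    then show "a \<le> norm x" by (simp add: mult_right_mono)
  qed
  have "\<forall>C\<in>chains A. \<exists>U\<in>A. \<forall>X\<in>C. X \<subseteq> U"
  proof
    fix C assume C: "C \<in> chains A"
    show "\<exists>U\<in>A. \<forall>X\<in>C. X \<subseteq> U"
    proof (cases "C = {}")
      case True then show ?thesis using G0ok A_def by blast
    next
      case False
      have CA: "C \<subseteq> A" and ch: "\<And>X Y. X \<in> C \<Longrightarrow> Y \<in> C \<Longrightarrow> X \<subseteq> Y \<or> Y \<subseteq> X"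
        using C unfolding chains_def chain_subset_def by blast+
      have okC: "\<And>X. X \<in> C \<Longrightarrow> hb_ok w X" using CA A_def by blast
      have "hb_ok w (\<Union>C)" unfolding hb_ok_def
      proof (intro conjI ballI allI impI)
        obtain X where X: "X \<in> C" using False by blast
        show "(0,0) \<in> \<Union>C" using okC[OF X] X unfolding hb_ok_def by blast
        show "(w, norm w) \<in> \<Union>C" using okC[OF X] X unfolding hb_ok_def by blast
      next
        fix p q assume "p \<in> \<Union>C" "q \<in> \<Union>C"
        then obtain X Y where XY: "X \<in> C" "Y \<in> C" "p \<in> X" "q \<in> Y" by blast
        show "p + q \<in> \<Union>C"
        proof (cases "X \<subseteq> Y")
          case True then show ?thesis using okC[OF XY(2)] XY unfolding hb_ok_def by blast
        next
          case False then have "Y \<subseteq> X" using ch[OF XY(1,2)] by blast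
          then show ?thesis using okC[OF XY(1)] XY unfolding hb_ok_def by blast
        qed
      next
        fix p r assume "p \<in> \<Union>C"
        then show "r *\<^sub>R p \<in> \<Union>C" using okC unfolding hb_ok_def by blast
      next
        fix x a assume "(x,a) \<in> \<Union>C"
        then show "a \<le> norm x" using okC unfolding hb_ok_def by blast
      qed
      then show ?thesis using A_def by blast
    qed
  qed
  from Zorn_Lemma2[OF this] obtain M where MA: "M \<in> A" and max: "\<forall>X\<in>A. M \<subseteq> X \<longrightarrow> X = M" by blast
  have ok: "hb_ok w M" using MA A_def by blast
  have tot: "\<exists>a. (x,a) \<in> M" for x
  proof (rule ccontr)
    assume "\<not> (\<exists>a. (x,a) \<in> M)"
    then obtain M' where "hb_ok w M'" "M \<subseteq> M'" "M' \<noteq> M" using hb_extend[OF ok] by blast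
    then show False using max A_def by blast
  qed
  define l where "l x = (THE a. (x,a) \<in> M)" for x
  have lM: "(x, l x) \<in> M" for x
  proof -
    obtain a where a: "(x,a) \<in> M" using tot by blast
    have "l x = a" unfolding l_def
    proof (rule the_equality)
      show "(x,a) \<in> M" by (rule a)
    next
      fix b assume "(x,b) \<in> M" then show "b = a" using hb_fun[OF ok a] by simp
    qed
    then show ?thesis using a by simp
  qed
  have ladd: "l (x + y) = l x + l y" for x y
  proof -
    have "(x,l x) + (y, l y) \<in> M" using ok lM unfolding hb_ok_def by blast
    then show ?thesis using hb_fun[OF ok lM] by simp
  qed
  have lsc: "l (r *\<^sub>R x) = r * l x" for r x
  proof -
    have "r *\<^sub>R (x,l x) \<in> M" using ok lM unfolding hb_ok_def by blast
    then show ?thesis using hb_fun[OF ok lM] by simp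
  qed
  have lb: "l x \<le> norm x" for x using ok lM unfolding hb_ok_def by blast
  have labs: "\<bar>l x\<bar> \<le> norm x" for x
  proof -
    have "l (-x) = - l x" using lsc[of "-1" x] by simp
    then show ?thesis using lb[of x] lb[of "-x"] by simp
  qed
  have "bounded_linear l"
    by (rule bounded_linear_intro[where K=1]) (use ladd lsc labs in auto)
  moreover have "l w = norm w"
  proof -
    have "(w, norm w) \<in> M" using ok unfolding hb_ok_def by blast
    then show ?thesis using hb_fun[OF ok lM[of w]] by simp
  qed
  ultimately show ?thesis using labs by (intro exI[of _ l]) simp
qed


lemma labs_ge0: "0 \<le> labs (x::'a::{ordered_real_vector,lattice})"
proof -
  have "x \<le> labs x" "-x \<le> labs x" unfolding labs_def by simp_all
  then have "0 \<le> labs x + labs x" using add_mono by fastforce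
  moreover have "labs x + labs x = (2::real) *\<^sub>R labs x" by (simp add: scaleR_2)
  ultimately have h: "0 \<le> (2::real) *\<^sub>R labs x" by simp
  have "0 \<le> (1/2::real) *\<^sub>R ((2::real) *\<^sub>R labs x)" by (rule scaleR_nonneg_nonneg) (simp_all add: h)
  then have "0 \<le> ((1/2::real) * 2) *\<^sub>R labs x" by (simp only: scaleR_scaleR)
  then show ?thesis by simp
qed

lemma labs_pos: "0 \<le> (x::'a::{ordered_real_vector,lattice}) \<Longrightarrow> labs x = x"
  unfolding labs_def by (rule sup_absorb1) (meson neg_le_0_iff_le order_trans)

lemma labs_le_iff: "labs (x::'a::{ordered_real_vector,lattice}) \<le> y \<longleftrightarrow> x \<le> y \<and> -x \<le> y"
  unfolding labs_def by simp

lemma labs_minus: "labs (-(x::'a::{ordered_real_vector,lattice})) = labs x"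
  unfolding labs_def by (simp add: sup_commute)

lemma inf_translate:
  fixes b c d :: "'a::{ordered_real_vector,lattice}"
  assumes "0 \<le> d" shows "inf (b + d) c \<le> inf b c + d"
proof -
  have "inf (b + d) c - d \<le> b" using inf_le1[of "b+d" c] by (simp add: diff_le_eq)
  moreover have "inf (b + d) c - d \<le> c" using inf_le2[of "b+d" c] assms
    by (metis add_increasing2 diff_le_eq)
  ultimately have "inf (b + d) c - d \<le> inf b c" by (rule inf_greatest)
  then show ?thesis by (simp only: diff_le_eq)
qed

lemma inf_lip:
  fixes a b c :: "'a::{ordered_real_vector,lattice}"
  shows "inf a c - inf b c \<le> labs (a - b)"
proof -
  have "a \<le> b + labs (a - b)" unfolding labs_def
    by (metis add.commute diff_le_eq sup_ge1)
  then have "inf a c \<le> inf (b + labs (a - b)) c" by (simp add: le_infI1)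
  also have "\<dots> \<le> inf b c + labs (a - b)" by (rule inf_translate[OF labs_ge0])
  finally show ?thesis by (simp add: diff_le_eq add.commute)
qed

lemma inf_lip_abs:
  fixes a b c :: "'a::{ordered_real_vector,lattice}"
  shows "labs (inf a c - inf b c) \<le> labs (a - b)"
proof -
  have 1: "inf a c - inf b c \<le> labs (a - b)" by (rule inf_lip)
  have "inf b c - inf a c \<le> labs (b - a)" by (rule inf_lip)
  also have "labs (b - a) = labs (a - b)" using labs_minus[of "a - b"] by simp
  finally show ?thesis unfolding labs_le_iff using 1 by simp
qed

lemma bl_norm_mono:
  assumes "banach_lattice TYPE('a::{banach,ordered_real_vector,lattice})"
    and "labs (x::'a) \<le> labs y" shows "norm x \<le> norm y"
  using assms unfolding banach_lattice_def by blast

lemma cone_closed: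
  assumes BL: "banach_lattice TYPE('a::{banach,ordered_real_vector,lattice})"
  shows "closed {x::'a. 0 \<le> x}"
proof -
  have "x \<in> {x. 0 \<le> x}" if lim: "x islimpt {x::'a. 0 \<le> x}" for x
  proof -
    have "norm (inf x 0) \<le> norm (x - y)" if "0 \<le> y" for y
    proof -
      have "labs (inf x 0 - inf y 0) \<le> labs (x - y)" by (rule inf_lip_abs)
      moreover have "inf y 0 = 0" using that by (simp add: inf_absorb2)
      ultimately show ?thesis using bl_norm_mono[OF BL] by simp
    qed
    moreover have "\<forall>e>0. \<exists>y. 0 \<le> y \<and> norm (x - y) < e"
      using lim unfolding islimpt_approachable dist_norm by (metis mem_Collect_eq norm_minus_commute)
    ultimately have *: "\<forall>e>0. norm (inf x 0) < e" by (meson le_less_trans)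
    have "norm (inf x 0) = 0"
    proof (rule ccontr)
      assume "norm (inf x 0) \<noteq> 0"
      then have "norm (inf x 0) > 0" by simp
      then have "norm (inf x 0) < norm (inf x 0)" using * by blast
      then show False by simp
    qed
    then have "inf x 0 = 0" by simp
    then show ?thesis by (simp add: inf_absorb2 le_iff_inf inf_commute)
  qed
  then show ?thesis unfolding closed_limpt by blast
qed

lemma closed_ge:
  assumes BL: "banach_lattice TYPE('a::{banach,ordered_real_vector,lattice})"
  shows "closed {x::'a. y \<le> x}"
proof -
  have e: "{x::'a. y \<le> x} = (\<lambda>x. x - y) -` {x. 0 \<le> x}" by auto
  show ?thesis unfolding e
    by (rule continuous_closed_vimage[OF cone_closed[OF BL]]) (intro continuous_intros)
qed

lemma closed_le:
  assumes BL: "banach_lattice TYPE('a::{banach,ordered_real_vector,lattice})"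
  shows "closed {x::'a. x \<le> y}"
proof -
  have e: "{x::'a. x \<le> y} = (\<lambda>x. y - x) -` {x. 0 \<le> x}" by auto
  show ?thesis unfolding e
    by (rule continuous_closed_vimage[OF cone_closed[OF BL]]) (intro continuous_intros)
qed

lemma baire_ball:
  fixes S :: "nat \<Rightarrow> 'b::banach set"
  assumes cl: "\<And>n. closed (S n)" and cov: "\<And>x. \<exists>n. x \<in> S n"
  shows "\<exists>n x e. 0 < e \<and> ball x e \<subseteq> S n"
proof (rule ccontr)
  assume H: "\<not> ?thesis"
  have "euclidean interior_of \<Union>(range S) = {}"
  proof (rule Baire_category_alt[OF disjI1[OF completely_metrizable_space_euclidean]])
    show "countable (range S)" by simp
    fix T assume "T \<in> range S"
    then obtain n where T: "T = S n" by blast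
    show "closedin euclidean T \<and> euclidean interior_of T = {}"
    proof
      show "closedin euclidean T" using cl T closed_closedin by blast
      show "euclidean interior_of T = {}"
      proof (rule ccontr)
        assume "euclidean interior_of T \<noteq> {}"
        then obtain x U where "openin euclidean U" "x \<in> U" "U \<subseteq> T" unfolding interior_of_def by blast
        then obtain e where "e > 0" "ball x e \<subseteq> U" by (metis open_contains_ball open_openin)
        then show False using H T \<open>U \<subseteq> T\<close> by blast
      qed
    qed
  qed
  moreover have "\<Union>(range S) = UNIV" using cov by blast
  moreover have "euclidean interior_of (UNIV::'b set) = UNIV" by (simp add: interior_of_eq)
  ultimately show False by simp
qed


lemma bound_E:
  fixes F :: "'b::banach \<Rightarrow> 'a::{banach,ordered_real_vector,lattice}"
  assumes BL: "banach_lattice TYPE('a)" and lin: "linear F" and cont: "continuous_on UNIV F"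
    and u: "0 \<le> u" and cov: "\<And>x. \<exists>c. -(c *\<^sub>R u) \<le> F x \<and> F x \<le> c *\<^sub>R u"
  shows "\<exists>K\<ge>0. \<forall>y. -((K * norm y) *\<^sub>R u) \<le> F y \<and> F y \<le> (K * norm y) *\<^sub>R u"
proof -
  define S where "S n = {x. -(real n *\<^sub>R u) \<le> F x \<and> F x \<le> real n *\<^sub>R u}" for n
  have isc: "isCont F x" for x using cont by (simp add: continuous_on_eq_continuous_at)
  have clS: "closed (S n)" for n
  proof -
    have "S n = F -` {y. -(real n *\<^sub>R u) \<le> y} \<inter> F -` {y. y \<le> real n *\<^sub>R u}" unfolding S_def by auto
    then show ?thesis using continuous_closed_vimage[OF closed_ge[OF BL] isc] continuous_closed_vimage[OF closed_le[OF BL] isc]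
      by (simp add: closed_Int)
  qed
  have covS: "\<exists>n. x \<in> S n" for x
  proof -
    obtain c where c: "-(c *\<^sub>R u) \<le> F x" "F x \<le> c *\<^sub>R u" using cov by blast
    define n where "n = nat \<lceil>\<bar>c\<bar>\<rceil>"
    have cn: "c \<le> real n" "-real n \<le> c" unfolding n_def by linarith+
    have h1: "c *\<^sub>R u \<le> real n *\<^sub>R u" by (rule scaleR_right_mono[OF cn(1) u])
    then have h2: "-(real n *\<^sub>R u) \<le> -(c *\<^sub>R u)" by simp
    have "-(real n *\<^sub>R u) \<le> F x" using order_trans[OF h2 c(1)] .
    moreover have "F x \<le> real n *\<^sub>R u" using order_trans[OF c(2) h1] .
    ultimately show ?thesis unfolding S_def by blast
  qed
  obtain n x0 e where e: "0 < e" "ball x0 e \<subseteq> S n" using baire_ball[OF clS covS] by blast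
  define K where "K = 4 * real n / e"
  have K0: "K \<ge> 0" unfolding K_def using e by simp
  have "-((K * norm y) *\<^sub>R u) \<le> F y \<and> F y \<le> (K * norm y) *\<^sub>R u" for y
  proof (cases "y = 0")
    case True then show ?thesis using linear_0[OF lin] by simp
  next
    case False
    define s where "s = e / (2 * norm y)"
    have s0: "s > 0" unfolding s_def using e False by simp
    have "dist x0 (x0 + s *\<^sub>R y) = e / 2" unfolding s_def dist_norm using False e by simp
    then have "x0 + s *\<^sub>R y \<in> S n" "x0 \<in> S n" using e by auto
    then have b1: "-(real n *\<^sub>R u) \<le> F x0 + s *\<^sub>R F y" "F x0 + s *\<^sub>R F y \<le> real n *\<^sub>R u"
      and b2: "-(real n *\<^sub>R u) \<le> F x0" "F x0 \<le> real n *\<^sub>R u"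
      unfolding S_def by (auto simp: linear_add[OF lin] linear_scale[OF lin])
    have tw: "(2 * real n) *\<^sub>R u = real n *\<^sub>R u + real n *\<^sub>R u" by (simp only: mult_2 scaleR_add_left)
    have up: "s *\<^sub>R F y \<le> (2 * real n) *\<^sub>R u"
    proof -
      have "s *\<^sub>R F y \<le> real n *\<^sub>R u - F x0" using b1(2) by (simp add: add.commute le_diff_eq)
      also have "\<dots> \<le> real n *\<^sub>R u + real n *\<^sub>R u"
      proof -
        have "- F x0 \<le> real n *\<^sub>R u" using b2(1) by (simp add: minus_le_iff)
        then show ?thesis unfolding diff_conv_add_uminus by (rule add_left_mono)
      qed
      finally show ?thesis unfolding tw .
    qed
    have lo: "-((2 * real n) *\<^sub>R u) \<le> s *\<^sub>R F y"
    proof -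
      have "-(real n *\<^sub>R u) - F x0 \<le> s *\<^sub>R F y" using b1(1) by (simp add: diff_le_eq add.commute)
      moreover have "-(real n *\<^sub>R u) - real n *\<^sub>R u \<le> -(real n *\<^sub>R u) - F x0" using b2(2) by simp
      moreover have "-((2 * real n) *\<^sub>R u) = -(real n *\<^sub>R u) - real n *\<^sub>R u" unfolding tw by simp
      ultimately show ?thesis by (metis order_trans)
    qed
    have kk: "1/s * (2 * real n) = K * norm y"
      unfolding K_def s_def using False e by (simp add: field_simps)
    have ones: "1/s * s = 1" using s0 by simp
    have "(1/s) *\<^sub>R (s *\<^sub>R F y) \<le> (1/s) *\<^sub>R ((2 * real n) *\<^sub>R u)"
      by (rule scaleR_left_mono[OF up]) (use s0 in simp)
    then have "F y \<le> (K * norm y) *\<^sub>R u" unfolding scaleR_scaleR kk ones scaleR_one .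
    moreover have "(1/s) *\<^sub>R (-((2 * real n) *\<^sub>R u)) \<le> (1/s) *\<^sub>R (s *\<^sub>R F y)"
      by (rule scaleR_left_mono[OF lo]) (use s0 in simp)
    then have "-((K * norm y) *\<^sub>R u) \<le> F y" unfolding scaleR_minus_right scaleR_scaleR kk ones scaleR_one .
    ultimately show ?thesis by simp
  qed
  then show ?thesis using K0 by blast
qed

lemma bound_dual:
  fixes G :: "'a::real_normed_vector \<Rightarrow> 'b::{real_normed_vector,ord}" and ph :: "'a \<Rightarrow> real"
  assumes ph_nn: "\<And>x. P x \<Longrightarrow> 0 \<le> ph x"
    and cov: "\<And>l::'b \<Rightarrow>\<^sub>L real. \<exists>c. \<forall>x. P x \<longrightarrow> \<bar>blinfun_apply l (G x)\<bar> \<le> c * ph x"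
  shows "\<exists>K\<ge>0. \<forall>x. P x \<longrightarrow> norm (G x) \<le> K * ph x"
proof -
  define T where "T n = {l::'b \<Rightarrow>\<^sub>L real. \<forall>x. P x \<longrightarrow> \<bar>blinfun_apply l (G x)\<bar> \<le> real n * ph x}" for n
  have clT: "closed (T n)" for n
  proof -
    have "T n = (\<Inter>x\<in>{x. P x}. {l. \<bar>blinfun_apply l (G x)\<bar> \<le> real n * ph x})" unfolding T_def by auto
    moreover have "closed {l::'b \<Rightarrow>\<^sub>L real. \<bar>blinfun_apply l w\<bar> \<le> c}" for w c
    proof -
      have bl: "bounded_linear (\<lambda>l::'b \<Rightarrow>\<^sub>L real. blinfun_apply l w)"
        by (rule bounded_bilinear.bounded_linear_left[OF bounded_bilinear_blinfun_apply])
      have "continuous_on UNIV (\<lambda>l::'b \<Rightarrow>\<^sub>L real. \<bar>blinfun_apply l w\<bar>)"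
        by (intro continuous_intros linear_continuous_on bl)
      then show ?thesis by (rule closed_Collect_le) (rule continuous_on_const)
    qed
    ultimately show ?thesis by (auto intro!: closed_INT)
  qed
  have covT: "\<exists>n. l \<in> T n" for l
  proof -
    obtain c where c: "\<forall>x. P x \<longrightarrow> \<bar>blinfun_apply l (G x)\<bar> \<le> c * ph x" using cov by blast
    define n where "n = nat \<lceil>\<bar>c\<bar>\<rceil>"
    have "c \<le> real n" unfolding n_def by linarith
    then have "c * ph x \<le> real n * ph x" if "P x" for x using ph_nn[OF that] by (simp add: mult_right_mono)
    then have "\<forall>x. P x \<longrightarrow> \<bar>blinfun_apply l (G x)\<bar> \<le> real n * ph x" using c by (meson order_trans)
    then show ?thesis unfolding T_def by blast
  qed
  obtain n l0 e where e: "0 < e" "ball l0 e \<subseteq> T n" using baire_ball[OF clT covT] by blast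
  define K where "K = 4 * real n / e"
  have K0: "K \<ge> 0" unfolding K_def using e by simp
  have main: "\<bar>blinfun_apply l (G x)\<bar> \<le> K * norm l * ph x" if Px: "P x" for l x
  proof (cases "l = 0")
    case True then show ?thesis by simp
  next
    case False
    define s where "s = e / (2 * norm l)"
    have s0: "s > 0" unfolding s_def using e False by simp
    have "dist l0 (l0 + s *\<^sub>R l) = e / 2" unfolding s_def dist_norm using False e by simp
    then have "l0 + s *\<^sub>R l \<in> T n" "l0 \<in> T n" using e by auto
    then have b1: "\<bar>blinfun_apply l0 (G x) + s * blinfun_apply l (G x)\<bar> \<le> real n * ph x"
      and b2: "\<bar>blinfun_apply l0 (G x)\<bar> \<le> real n * ph x"
      unfolding T_def using Px by (auto simp: blinfun.add_left blinfun.scaleR_left)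
    have "s * \<bar>blinfun_apply l (G x)\<bar> \<le> 2 * real n * ph x" using b1 b2 s0 by (simp add: abs_mult)
    then have "\<bar>blinfun_apply l (G x)\<bar> \<le> (2 * real n * ph x) / s" using s0 by (simp add: field_simps)
    also have "\<dots> = K * norm l * ph x" unfolding K_def s_def using e False by (simp add: field_simps)
    finally show ?thesis .
  qed
  have "norm (G x) \<le> K * ph x" if Px: "P x" for x
  proof -
    obtain hl where hl: "bounded_linear hl" "\<forall>z. \<bar>hl z\<bar> \<le> norm z" "hl (G x) = norm (G x)"
      using hahn_banach_norming by blast
    define L where "L = Blinfun hl"
    have La: "blinfun_apply L = hl" unfolding L_def using bounded_linear_Blinfun_apply[OF hl(1)] .
    have nL: "norm L \<le> 1" by (rule norm_blinfun_bound) (use La hl(2) in auto)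
    have "norm (G x) \<le> K * norm L * ph x" using main[OF Px, of L] La hl(3) by simp
    also have "\<dots> \<le> K * 1 * ph x" using nL K0 ph_nn[OF Px] by (intro mult_right_mono mult_left_mono) auto
    finally show ?thesis by simp
  qed
  then show ?thesis using K0 by blast
qed


definition inband :: "'a::ordered_real_vector \<Rightarrow> 'a \<Rightarrow> real \<Rightarrow> bool" where
  "inband u y t \<longleftrightarrow> -(t *\<^sub>R u) \<le> y \<and> y \<le> t *\<^sub>R u"

lemma band_add: "inband u y1 t1 \<Longrightarrow> inband u y2 t2 \<Longrightarrow> inband u (y1 + y2) (t1 + t2)"
proof -
  assume a: "inband u y1 t1" "inband u y2 t2"
  have "y1 + y2 \<le> t1 *\<^sub>R u + t2 *\<^sub>R u" using a unfolding inband_def by (intro add_mono) auto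
  moreover have "-(t1 *\<^sub>R u) + -(t2 *\<^sub>R u) \<le> y1 + y2" using a unfolding inband_def by (intro add_mono) auto
  ultimately show ?thesis unfolding inband_def by (simp add: scaleR_add_left)
qed

lemma band_neg: "inband u y t \<Longrightarrow> inband u (-y) t"
  unfolding inband_def by (simp add: minus_le_iff)

lemma band_mono: "0 \<le> u \<Longrightarrow> t \<le> t' \<Longrightarrow> inband u y t \<Longrightarrow> inband u y t'"
  unfolding inband_def using scaleR_right_mono[of t t' u]
  by (meson neg_le_iff_le order_trans)

lemma band_su: "0 \<le> u \<Longrightarrow> inband u (s *\<^sub>R u) \<bar>s\<bar>"
  unfolding inband_def using scaleR_right_mono[of s "\<bar>s\<bar>" u] scaleR_right_mono[of "-\<bar>s\<bar>" s u]
  by auto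

lemma band_zero: "0 \<le> t \<Longrightarrow> 0 \<le> u \<Longrightarrow> inband u 0 t"
  unfolding inband_def by (simp add: scaleR_nonneg_nonneg)

lemma band_lower: "inband u y t \<Longrightarrow> -(t *\<^sub>R u) \<le> y" unfolding inband_def by simp

lemma pos_mono:
  fixes P :: "'a::ordered_real_vector \<Rightarrow> 'b::ordered_real_vector"
  assumes "linear P" "\<forall>x\<ge>0. 0 \<le> P x" "y \<le> z" shows "P y \<le> P z"
proof -
  have "0 \<le> z - y" using assms(3) by simp
  then have "0 \<le> P (z - y)" using assms(2) by blast
  then show ?thesis using linear_diff[OF assms(1)] by simp
qed

lemma band_op:
  assumes lP: "linear P" and Ppos: "\<forall>x\<ge>0. 0 \<le> P x" and u: "0 \<le> u" and Pu: "P u \<le> a *\<^sub>R u"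
    and t: "0 \<le> t" and y: "inband u y t"
  shows "inband u (P y) (t * a)"
proof -
  have "P y \<le> P (t *\<^sub>R u)" using y pos_mono[OF lP Ppos] unfolding inband_def by blast
  also have "\<dots> = t *\<^sub>R P u" by (simp add: linear_scale[OF lP])
  also have "\<dots> \<le> t *\<^sub>R (a *\<^sub>R u)" by (rule scaleR_left_mono[OF Pu t])
  finally have 1: "P y \<le> (t * a) *\<^sub>R u" by simp
  have "P (-(t *\<^sub>R u)) \<le> P y" using y pos_mono[OF lP Ppos] unfolding inband_def by blast
  moreover have "P (-(t *\<^sub>R u)) = -(t *\<^sub>R P u)" by (simp add: linear_neg[OF lP] linear_scale[OF lP])
  moreover have "-(t *\<^sub>R (a *\<^sub>R u)) \<le> -(t *\<^sub>R P u)" using scaleR_left_mono[OF Pu t] by simp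
  ultimately have "-((t * a) *\<^sub>R u) \<le> P y" by (metis order_trans scaleR_scaleR)
  with 1 show ?thesis unfolding inband_def by simp
qed

lemma band_fun:
  assumes lph: "linear ph" and phpos: "\<forall>x\<ge>0. 0 \<le> ph x" and y: "inband u y t"
  shows "\<bar>ph y\<bar> \<le> t * ph u"
proof -
  have "ph y \<le> ph (t *\<^sub>R u)" using y pos_mono[OF lph phpos] unfolding inband_def by blast
  moreover have "ph (-(t *\<^sub>R u)) \<le> ph y" using y pos_mono[OF lph phpos] unfolding inband_def by blast
  ultimately show ?thesis by (simp add: linear_neg[OF lph] linear_scale[OF lph])
qed

lemma expand_pow:
  fixes r :: "'a::ordered_real_vector \<Rightarrow> 'a" and ph :: "'a \<Rightarrow> real"
  assumes lr: "linear r" and lph: "linear ph" and phpos: "\<forall>x\<ge>0. 0 \<le> ph x" and u: "0 \<le> u"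
    and c: "0 \<le> c"
    and Ppos: "\<forall>x\<ge>0. 0 \<le> r x + (c * ph x) *\<^sub>R u"
    and Pu: "r u + (c * ph u) *\<^sub>R u \<le> a *\<^sub>R u"
    and Pph: "\<forall>x\<ge>0. ph (r x + (c * ph x) *\<^sub>R u) \<le> b * ph x"
  shows "\<exists>K. \<forall>x\<ge>0. -((K * ph x) *\<^sub>R u) \<le> (r ^^ n) x"
proof -
  define P where "P x = r x + (c * ph x) *\<^sub>R u" for x
  define a0 where "a0 = max a 0"
  define b0 where "b0 = max b 0"
  have a0: "0 \<le> a0" and b0: "0 \<le> b0" unfolding a0_def b0_def by simp_all
  have lP: "linear P" unfolding P_def
    by (rule linearI) (simp_all add: linear_add[OF lr] linear_add[OF lph] linear_scale[OF lr] linear_scale[OF lph] algebra_simps scaleR_add_left)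
  have Pp: "\<forall>x\<ge>0. 0 \<le> P x" using Ppos P_def by simp
  have Pu0: "P u \<le> a0 *\<^sub>R u" using Pu scaleR_right_mono[of a a0 u] u unfolding P_def a0_def by (meson max.cobounded1 order_trans)
  have Pph0: "ph (P x) \<le> b0 * ph x" if "0 \<le> x" for x
    using Pph that phpos mult_right_mono[of b b0 "ph x"] unfolding P_def b0_def by (meson max.cobounded1 order_trans)
  have Pn: "0 \<le> (P ^^ k) x \<and> ph ((P ^^ k) x) \<le> b0 ^ k * ph x" if "0 \<le> x" for k x
  proof (induction k)
    case 0 then show ?case using that by simp
  next
    case (Suc k)
    have "0 \<le> (P ^^ Suc k) x" using Pp Suc by simp
    moreover have "ph ((P ^^ Suc k) x) \<le> b0 * ph ((P ^^ k) x)" using Pph0 Suc by simp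
    moreover have "b0 * ph ((P ^^ k) x) \<le> b0 * (b0 ^ k * ph x)" using Suc b0 by (simp add: mult_left_mono)
    ultimately show ?case by simp
  qed
  have H: "\<exists>K\<ge>0. \<forall>x\<ge>0. inband u ((r ^^ k) x - (P ^^ k) x) (K * ph x)" for k
  proof (induction k)
    case 0 then show ?case using band_zero[of 0 u] u by (intro exI[of _ 0]) simp
  next
    case (Suc k)
    then obtain K where K: "K \<ge> 0" "\<forall>x\<ge>0. inband u ((r ^^ k) x - (P ^^ k) x) (K * ph x)" by blast
    define K' where "K' = K * a0 + c * K * ph u + c * b0 ^ k"
    have "inband u ((r ^^ Suc k) x - (P ^^ Suc k) x) (K' * ph x)" if x: "0 \<le> x" for x
    proof -
      define S where "S = (r ^^ k) x - (P ^^ k) x"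
      have S: "inband u S (K * ph x)" using K x S_def by simp
      have phx: "0 \<le> ph x" using phpos x by simp
      have eq: "(r ^^ Suc k) x - (P ^^ Suc k) x = P S + (-((c * ph S) *\<^sub>R u)) + (-((c * ph ((P ^^ k) x)) *\<^sub>R u))"
      proof -
        have "(r ^^ Suc k) x = r (S + (P ^^ k) x)" unfolding S_def by simp
        also have "\<dots> = r S + r ((P ^^ k) x)" by (simp add: linear_add[OF lr])
        finally show ?thesis unfolding P_def by simp
      qed
      have b1: "inband u (P S) ((K * ph x) * a0)"
        by (rule band_op[OF lP Pp u Pu0 _ S]) (use K phx in simp)
      have phS: "\<bar>ph S\<bar> \<le> K * ph x * ph u" using band_fun[OF lph phpos S] .
      have b2: "inband u (-((c * ph S) *\<^sub>R u)) (c * K * ph u * ph x)"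
      proof -
        have "inband u ((c * ph S) *\<^sub>R u) \<bar>c * ph S\<bar>" by (rule band_su[OF u])
        moreover have "\<bar>c * ph S\<bar> \<le> c * K * ph u * ph x" using mult_left_mono[OF phS c] c by (simp add: abs_mult mult_ac)
        ultimately show ?thesis using band_mono[OF u] band_neg by blast
      qed
      have Pk: "0 \<le> (P ^^ k) x" "ph ((P ^^ k) x) \<le> b0 ^ k * ph x" using Pn[OF x] by auto
      have b3: "inband u (-((c * ph ((P ^^ k) x)) *\<^sub>R u)) (c * b0 ^ k * ph x)"
      proof -
        have "inband u ((c * ph ((P ^^ k) x)) *\<^sub>R u) \<bar>c * ph ((P ^^ k) x)\<bar>" by (rule band_su[OF u])
        moreover have "\<bar>c * ph ((P ^^ k) x)\<bar> \<le> c * b0 ^ k * ph x"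
          using Pk c phpos by (simp add: abs_mult mult_left_mono mult_ac)
        ultimately show ?thesis using band_mono[OF u] band_neg by blast
      qed
      have "inband u ((r ^^ Suc k) x - (P ^^ Suc k) x) (K * ph x * a0 + c * K * ph u * ph x + c * b0 ^ k * ph x)"
        unfolding eq by (intro band_add b1 b2 b3)
      moreover have "K * ph x * a0 + c * K * ph u * ph x + c * b0 ^ k * ph x = K' * ph x"
        unfolding K'_def by (simp add: algebra_simps)
      ultimately show ?thesis by simp
    qed
    moreover have "K' \<ge> 0" unfolding K'_def using K a0 b0 c phpos u by (simp add: zero_le_mult_iff)
    ultimately show ?case by blast
  qed
  obtain K where K: "\<forall>x\<ge>0. inband u ((r ^^ n) x - (P ^^ n) x) (K * ph x)" using H by blast
  have "-((K * ph x) *\<^sub>R u) \<le> (r ^^ n) x" if x: "0 \<le> x" for x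
  proof -
    have "-((K * ph x) *\<^sub>R u) \<le> (r ^^ n) x - (P ^^ n) x" using band_lower K x by blast
    also have "\<dots> \<le> (r ^^ n) x" using Pn[OF x] by simp
    finally show ?thesis .
  qed
  then show ?thesis by blast
qed

lemma pow_bound:
  fixes r :: "'a::ordered_real_vector \<Rightarrow> 'a" and ph ps :: "'a \<Rightarrow> real"
  assumes lr: "linear r" and lph: "linear ph" and lps: "linear ps" and phpos: "\<forall>x\<ge>0. 0 \<le> ph x"
    and u: "0 \<le> u" and ep: "0 < \<epsilon>" and vu: "\<epsilon> *\<^sub>R u \<le> v" and vM: "v \<le> M *\<^sub>R u"
    and psb: "\<forall>x\<ge>0. \<epsilon> * ph x \<le> ps x \<and> ps x \<le> M * ph x"
    and ev: "r v = \<kappa> *\<^sub>R v" and evd: "\<forall>x. ps (r x) = \<kappa> * ps x"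
    and c: "0 \<le> c" and Ppos: "\<forall>x\<ge>0. 0 \<le> r x + (c * ph x) *\<^sub>R u"
  shows "\<exists>K. \<forall>x\<ge>0. -((K * ph x) *\<^sub>R u) \<le> (r ^^ n) x"
proof (rule expand_pow[OF lr lph phpos u c Ppos])
  define P where "P x = r x + (c * ph x) *\<^sub>R u" for x
  have lP: "linear P" unfolding P_def
    by (rule linearI) (simp_all add: linear_add[OF lr] linear_add[OF lph] linear_scale[OF lr] linear_scale[OF lph] algebra_simps scaleR_add_left)
  have Pp: "\<forall>x\<ge>0. 0 \<le> P x" using Ppos P_def by simp
  have v0: "0 \<le> v" using order_trans[OF scaleR_nonneg_nonneg[OF less_imp_le[OF ep] u] vu] .
  have "P (\<epsilon> *\<^sub>R u) \<le> P v" by (rule pos_mono[OF lP Pp vu])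
  then have e1: "\<epsilon> *\<^sub>R P u \<le> P v" by (simp add: linear_scale[OF lP])
  have "\<kappa> *\<^sub>R v \<le> \<bar>\<kappa>\<bar> *\<^sub>R v" by (rule scaleR_right_mono[OF _ v0]) simp
  also have "\<dots> \<le> \<bar>\<kappa>\<bar> *\<^sub>R (M *\<^sub>R u)" by (rule scaleR_left_mono[OF vM]) simp
  finally have "P v \<le> (\<bar>\<kappa>\<bar> * M) *\<^sub>R u + (c * ph v) *\<^sub>R u" unfolding P_def ev by simp
  then have "\<epsilon> *\<^sub>R P u \<le> ((\<bar>\<kappa>\<bar> * M + c * ph v)) *\<^sub>R u" using e1 by (simp add: scaleR_add_left)
  then have "(1/\<epsilon>) *\<^sub>R (\<epsilon> *\<^sub>R P u) \<le> (1/\<epsilon>) *\<^sub>R (((\<bar>\<kappa>\<bar> * M + c * ph v)) *\<^sub>R u)"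
    by (rule scaleR_left_mono) (use ep in simp)
  then have "P u \<le> ((\<bar>\<kappa>\<bar> * M + c * ph v) / \<epsilon>) *\<^sub>R u" using ep by simp
  then show "r u + (c * ph u) *\<^sub>R u \<le> ((\<bar>\<kappa>\<bar> * M + c * ph v) / \<epsilon>) *\<^sub>R u" unfolding P_def .
  show "\<forall>x\<ge>0. ph (r x + (c * ph x) *\<^sub>R u) \<le> ((\<bar>\<kappa>\<bar> * M + c * ps u) / \<epsilon>) * ph x"
  proof (intro allI impI)
    fix x :: 'a assume x: "0 \<le> x"
    have Px: "0 \<le> P x" using Pp x by simp
    have "\<epsilon> * ph (P x) \<le> ps (P x)" using psb Px by blast
    also have "ps (P x) = \<kappa> * ps x + c * ph x * ps u"
      unfolding P_def by (simp add: linear_add[OF lps] linear_scale[OF lps] evd)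
    also have "\<kappa> * ps x \<le> \<bar>\<kappa>\<bar> * M * ph x"
    proof -
      have "0 \<le> ps x" "ps x \<le> M * ph x" using psb x phpos ep
        by (meson mult_nonneg_nonneg less_imp_le order_trans)+
      then show ?thesis by (metis abs_ge_self abs_ge_zero mult.assoc mult_mono order_trans)
    qed
    finally have "\<epsilon> * ph (P x) \<le> (\<bar>\<kappa>\<bar> * M + c * ps u) * ph x" by (simp add: algebra_simps)
    then show "ph (r x + (c * ph x) *\<^sub>R u) \<le> ((\<bar>\<kappa>\<bar> * M + c * ps u) / \<epsilon>) * ph x"
      unfolding P_def using ep by (simp add: field_simps)
  qed
qed


lemma cscale_real[simp]: "cscale (complex_of_real r) z = r *\<^sub>R z"
  unfolding cscale_def by (simp add: prod_eq_iff)

lemma cscale_add: "cscale c (x + y) = cscale c x + cscale c y"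
  unfolding cscale_def by (simp add: algebra_simps prod_eq_iff scaleR_add_right)

lemma cscale_diff: "cscale c (x - y) = cscale c x - cscale c y"
  unfolding cscale_def by (simp add: algebra_simps prod_eq_iff scaleR_diff_right)

lemma cscale_mult: "cscale a (cscale b x) = cscale (a * b) x"
  unfolding cscale_def by (simp add: algebra_simps prod_eq_iff scaleR_add_right scaleR_diff_right)

lemma cscale_zero[simp]: "cscale c 0 = 0"
  unfolding cscale_def by (simp add: zero_prod_def)

lemma cscale_scaleR: "cscale c (r *\<^sub>R x) = r *\<^sub>R cscale c x"
  using cscale_mult[of c "complex_of_real r" x] cscale_mult[of "complex_of_real r" c x]
  by (simp add: mult.commute)

lemma cscale_ii: "cscale \<i> (b, 0) = (0, b)"
  unfolding cscale_def by simp

lemma cscale_real_pair: "cscale c (x, 0) = (Re c *\<^sub>R x, Im c *\<^sub>R x)"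
  unfolding cscale_def by simp

locale resop =
  fixes D :: "('a::{banach,ordered_real_vector,lattice} \<times> 'a) set" and A :: "'a \<times> 'a \<Rightarrow> 'a \<times> 'a"
  assumes lin: "linear_op D A" and real: "real_op D A"
begin

lemma D0: "0 \<in> D" and Dadd: "x \<in> D \<Longrightarrow> y \<in> D \<Longrightarrow> x + y \<in> D"
  and Dsc: "x \<in> D \<Longrightarrow> cscale c x \<in> D"
  and Aadd: "x \<in> D \<Longrightarrow> y \<in> D \<Longrightarrow> A (x + y) = A x + A y"
  and Asc: "x \<in> D \<Longrightarrow> A (cscale c x) = cscale c (A x)"
  using lin unfolding linear_op_def complex_subspace_def by blast+

lemma DscR: "x \<in> D \<Longrightarrow> r *\<^sub>R x \<in> D" using Dsc[of x "complex_of_real r"] by simp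
lemma AscR: "x \<in> D \<Longrightarrow> A (r *\<^sub>R x) = r *\<^sub>R A x" using Asc[of x "complex_of_real r"] by simp
lemma Dneg: "x \<in> D \<Longrightarrow> -x \<in> D" using DscR[of x "-1"] by simp
lemma Ddiff: assumes "x \<in> D" "y \<in> D" shows "x - y \<in> D"
  using Dadd[OF assms(1) Dneg[OF assms(2)]] by simp
lemma A0: "A 0 = 0" using Aadd[OF D0 D0] by simp
lemma Aneg: "x \<in> D \<Longrightarrow> A (-x) = - A x" using AscR[of x "-1"] by simp
lemma Adiff: assumes "x \<in> D" "y \<in> D" shows "A (x - y) = A x - A y"
  using Aadd[OF assms(1) Dneg[OF assms(2)]] Aneg[OF assms(2)] by simp

lemma Dreal: "(x, y) \<in> D \<longleftrightarrow> (x, 0) \<in> D \<and> (y, 0) \<in> D"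
  using real unfolding real_op_def by (metis (no_types, lifting) case_prod_conv mem_Collect_eq)

lemma Areal: "(x, 0) \<in> D \<Longrightarrow> snd (A (x, 0)) = 0"
  using real unfolding real_op_def by blast

definition "A1 x = fst (A (x, 0))"

lemma A_split: assumes "(x, y) \<in> D" shows "A (x, y) = (A1 x, A1 y)"
proof -
  have d: "(x,0) \<in> D" "(y,0) \<in> D" using assms Dreal[of x y] by blast+
  have "(x, y) = (x, 0) + cscale \<i> (y, 0)" by (simp add: cscale_ii)
  then have "A (x, y) = A (x, 0) + cscale \<i> (A (y, 0))" using Aadd[OF d(1) Dsc[OF d(2)]] Asc[OF d(2)] by simp
  also have "A (x, 0) = (A1 x, 0)" using Areal[OF d(1)] unfolding A1_def by (simp add: prod_eq_iff)
  also have "A (y, 0) = (A1 y, 0)" using Areal[OF d(2)] unfolding A1_def by (simp add: prod_eq_iff)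
  finally show ?thesis by (simp add: cscale_ii)
qed

end

locale resolv = resop +
  fixes \<mu> :: real
  assumes res: "complex_of_real \<mu> \<in> resolvent_set D A"
begin

abbreviation "R \<equiv> resolvent D A (complex_of_real \<mu>)"

lemma bij: "bij_betw (\<lambda>g. \<mu> *\<^sub>R g - A g) D UNIV"
  using res unfolding resolvent_set_def by simp

lemma R_cont: "continuous_on UNIV R"
  using res unfolding resolvent_set_def by simp

lemma ex1: "\<exists>!g. g \<in> D \<and> \<mu> *\<^sub>R g - A g = f"
proof -
  have "f \<in> (\<lambda>g. \<mu> *\<^sub>R g - A g) ` D" using bij unfolding bij_betw_def by simp
  then obtain g where g: "g \<in> D" "\<mu> *\<^sub>R g - A g = f" by blast
  moreover have "g' = g" if "g' \<in> D" "\<mu> *\<^sub>R g' - A g' = f" for g'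
    using bij g that unfolding bij_betw_def inj_on_def by metis
  ultimately show ?thesis by blast
qed

lemma R_in: "R f \<in> D" and R_eq: "\<mu> *\<^sub>R R f - A (R f) = f"
proof -
  have "R f \<in> D \<and> \<mu> *\<^sub>R R f - A (R f) = f"
    unfolding resolvent_def cscale_real by (rule theI'[OF ex1])
  then show "R f \<in> D" "\<mu> *\<^sub>R R f - A (R f) = f" by auto
qed

lemma R_inv: "g \<in> D \<Longrightarrow> R (\<mu> *\<^sub>R g - A g) = g"
  using ex1[of "\<mu> *\<^sub>R g - A g"] R_in R_eq by blast

lemma R_uniq: "g \<in> D \<Longrightarrow> \<mu> *\<^sub>R g - A g = f \<Longrightarrow> R f = g"
  using R_inv by blast

lemma R_add: "R (f1 + f2) = R f1 + R f2"
proof (rule R_uniq)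
  show "R f1 + R f2 \<in> D" by (rule Dadd[OF R_in R_in])
  have "\<mu> *\<^sub>R (R f1 + R f2) - A (R f1 + R f2) = (\<mu> *\<^sub>R R f1 - A (R f1)) + (\<mu> *\<^sub>R R f2 - A (R f2))"
    using Aadd[OF R_in R_in] by (simp add: algebra_simps scaleR_add_right)
  then show "\<mu> *\<^sub>R (R f1 + R f2) - A (R f1 + R f2) = f1 + f2" using R_eq by simp
qed

lemma R_cscale: "R (cscale c f) = cscale c (R f)"
proof (rule R_uniq)
  show "cscale c (R f) \<in> D" by (rule Dsc[OF R_in])
  have "\<mu> *\<^sub>R cscale c (R f) - A (cscale c (R f)) = cscale c (\<mu> *\<^sub>R R f - A (R f))"
    using Asc[OF R_in] by (simp add: cscale_diff cscale_scaleR)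
  then show "\<mu> *\<^sub>R cscale c (R f) - A (cscale c (R f)) = cscale c f" using R_eq by simp
qed

lemma R_scaleR: "R (r *\<^sub>R f) = r *\<^sub>R R f" using R_cscale[of "complex_of_real r" f] by simp
lemma R_0: "R 0 = 0" using R_scaleR[of 0 0] by simp
lemma R_neg: "R (- f) = - R f" using R_scaleR[of "-1" f] by simp
lemma R_diff: "R (f1 - f2) = R f1 - R f2" using R_add[of f1 "-f2"] R_neg by simp

lemma R_real: "snd (R (x, 0)) = 0"
proof -
  obtain a b where ab: "R (x, 0) = (a, b)" by fastforce
  have d: "(a, b) \<in> D" using R_in[of "(x,0)"] ab by simp
  then have db: "(b, 0) \<in> D" using Dreal[of a b] by blast
  have "\<mu> *\<^sub>R (a, b) - (A1 a, A1 b) = (x, 0)" using R_eq[of "(x,0)"] ab A_split[OF d] by simp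
  then have "\<mu> *\<^sub>R b - A1 b = 0" by simp
  moreover have "A (b, 0) = (A1 b, 0)" using A_split[of b 0] db A1_def A0
    by (metis Areal prod.collapse)
  ultimately have "\<mu> *\<^sub>R (b, 0) - A (b, 0) = 0" by simp
  then have "R 0 = (b, 0)" using R_uniq[OF db] by simp
  then show ?thesis using R_0 ab by (simp add: zero_prod_def)
qed

definition "r x = fst (R (x, 0))"

lemma R_pair: "R (x, 0) = (r x, 0)"
  using R_real unfolding r_def by (simp add: prod_eq_iff)

lemma r_linear: "linear r"
proof (rule linearI)
  fix x y show "r (x + y) = r x + r y" unfolding r_def using R_add[of "(x,0)" "(y,0)"] by simp
next
  fix c x show "r (c *\<^sub>R x) = c *\<^sub>R r x" unfolding r_def using R_scaleR[of c "(x,0)"] by simp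
qed

lemma r_cont: "continuous_on UNIV r"
proof -
  have "continuous_on UNIV (\<lambda>x. fst (R (x, 0)))"
    by (intro continuous_on_compose2[OF continuous_on_fst] continuous_on_compose2[OF R_cont]) (auto intro!: continuous_intros)
  then show ?thesis unfolding r_def by simp
qed

lemma R_pow_pair: "(R ^^ n) (x, 0) = ((r ^^ n) x, 0)"
  by (induction n) (simp_all add: R_pair)

lemma R_pow_add: "(R ^^ n) (f1 + f2) = (R ^^ n) f1 + (R ^^ n) f2"
  by (induction n) (simp_all add: R_add)

lemma R_pow_cscale: "(R ^^ n) (cscale c f) = cscale c ((R ^^ n) f)"
  by (induction n) (simp_all add: R_cscale)

lemma R_pow_scaleR: "(R ^^ n) (s *\<^sub>R f) = s *\<^sub>R ((R ^^ n) f)"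
  using R_pow_cscale[of n "complex_of_real s" f] by simp

lemma R_pow_diff: "(R ^^ n) (f1 - f2) = (R ^^ n) f1 - (R ^^ n) f2"
  using R_pow_add[of n f1 "-f2"] R_pow_scaleR[of n "-1" f2] by simp

lemma R_pow_cont: "continuous_on UNIV (R ^^ n)"
proof (induction n)
  case 0 then show ?case by (simp add: continuous_on_id)
next
  case (Suc n)
  have "continuous_on UNIV (R \<circ> (R ^^ n))"
    by (rule continuous_on_compose[OF Suc]) (use R_cont continuous_on_subset in blast)
  then show ?case by (simp add: o_def)
qed

lemma R_A: "f \<in> D \<Longrightarrow> R (A f) = \<mu> *\<^sub>R R f - f"
proof -
  assume f: "f \<in> D"
  have "R (\<mu> *\<^sub>R f - A f) = f" by (rule R_inv[OF f])
  then have "\<mu> *\<^sub>R R f - R (A f) = f" by (simp add: R_diff R_scaleR)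
  then show ?thesis by (simp add: algebra_simps)
qed

lemma pow_dom_R: "(R ^^ k) g \<in> pow_dom UNIV D A k"
proof (induction k arbitrary: g)
  case 0 then show ?case by simp
next
  case (Suc k)
  have "(R ^^ Suc k) g = R ((R ^^ k) g)" by simp
  moreover have "A (R ((R ^^ k) g)) = (R ^^ k) (\<mu> *\<^sub>R R g - g)"
  proof -
    have sw: "R ((R ^^ k) g) = (R ^^ k) (R g)" by (simp add: funpow_swap1)
    have "A (R ((R ^^ k) g)) = \<mu> *\<^sub>R R ((R ^^ k) g) - (R ^^ k) g" using R_eq[of "(R ^^ k) g"] by (simp add: algebra_simps)
    then show ?thesis by (simp add: sw R_pow_diff R_pow_scaleR)
  qed
  ultimately show ?case using Suc[of "\<mu> *\<^sub>R R g - g"] R_in by simp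
qed

end


lemma cdualD: assumes "x' \<in> cdual"
  shows "x' (f + g) = x' f + x' g" "x' (cscale c f) = c * x' f" "continuous_on UNIV x'"
  using assms unfolding cdual_def by blast+

lemma cdual_scaleR: "x' \<in> cdual \<Longrightarrow> x' (r *\<^sub>R f) = r * x' f"
  using cdualD(2)[of x' "complex_of_real r" f] by simp

lemma cdual_neg: "x' \<in> cdual \<Longrightarrow> x' (- f) = - x' f"
  using cdual_scaleR[of x' "-1" f] by simp

lemma cdual_diff: "x' \<in> cdual \<Longrightarrow> x' (f - g) = x' f - x' g"
  using cdualD(1)[of x' f "-g"] cdual_neg[of x' g] by simp

lemma cdual_lin: assumes "x' \<in> cdual" "y' \<in> cdual"
  shows "(\<lambda>f. a * x' f + b * y' f) \<in> cdual"
  unfolding cdual_def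
proof (intro CollectI conjI allI)
  fix f g show "a * x' (f + g) + b * y' (f + g) = a * x' f + b * y' f + (a * x' g + b * y' g)"
    using cdualD(1)[OF assms(1)] cdualD(1)[OF assms(2)] by (simp add: algebra_simps)
next
  fix c f show "a * x' (cscale c f) + b * y' (cscale c f) = c * (a * x' f + b * y' f)"
    using cdualD(2)[OF assms(1)] cdualD(2)[OF assms(2)] by (simp add: algebra_simps)
next
  show "continuous_on UNIV (\<lambda>f. a * x' f + b * y' f)"
    using cdualD(3)[OF assms(1)] cdualD(3)[OF assms(2)] by (intro continuous_intros)
qed

lemma cdual_cmult: assumes "x' \<in> cdual" shows "(\<lambda>f. a * x' f) \<in> cdual"
  using cdual_lin[OF assms assms, of a 0] by simp

lemma dense_eq:
  fixes D :: "('a::real_normed_vector \<times> 'a) set"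
  assumes "densely_defined D" "continuous_on UNIV f" "continuous_on UNIV (g :: _ \<Rightarrow> complex)"
    and "\<forall>x\<in>D. f x = g x"
  shows "f = g"
proof -
  have "closed {x. f x = g x}" by (rule closed_Collect_eq[OF assms(2,3)])
  moreover have "D \<subseteq> {x. f x = g x}" using assms(4) by blast
  ultimately have "closure D \<subseteq> {x. f x = g x}" by (rule closure_minimal[rotated])
  then show ?thesis using assms(1) unfolding densely_defined_def by auto
qed

context resop begin

lemma adj_eq:
  assumes dense: "densely_defined D" and x: "x' \<in> cdual" and y: "y' \<in> cdual"
    and eq: "\<forall>f\<in>D. x' (A f) = y' f"
  shows "adj D A x' = y'"
  unfolding adj_def
proof (rule the_equality)
  show "y' \<in> cdual \<and> (\<forall>f\<in>D. x' (A f) = y' f)" using y eq by blast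
  fix y'' assume h: "y'' \<in> cdual \<and> (\<forall>f\<in>D. x' (A f) = y'' f)"
  show "y'' = y'" by (rule dense_eq[OF dense cdualD(3) cdualD(3)]) (use h y eq in auto)
qed

lemma adj_prop:
  assumes dense: "densely_defined D" and x: "x' \<in> adj_dom D A"
  shows "adj D A x' \<in> cdual \<and> (\<forall>f\<in>D. x' (A f) = adj D A x' f)"
proof -
  obtain y' where y: "x' \<in> cdual" "y' \<in> cdual" "\<forall>f\<in>D. x' (A f) = y' f" using x unfolding adj_dom_def by blast
  then show ?thesis using adj_eq[OF dense y] by simp
qed

lemma pow_dom_eigv:
  assumes vD: "(v, 0) \<in> D" and Av: "A (v, 0) = lam *\<^sub>R (v, 0)"
  shows "cscale c (v, 0) \<in> pow_dom UNIV D A k"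
proof (induction k arbitrary: c)
  case 0 then show ?case by simp
next
  case (Suc k)
  have "A (cscale c (v, 0)) = cscale (c * complex_of_real lam) (v, 0)"
    using Asc[OF vD] Av cscale_mult[of c "complex_of_real lam" "(v,0)"] by simp
  then show ?case using Suc Dsc[OF vD] by simp
qed

lemma pow_dom_eigd:
  assumes dense: "densely_defined D" and psi: "\<psi> \<in> adj_dom D A"
    and adjpsi: "adj D A \<psi> = (\<lambda>f. lam * \<psi> f)"
  shows "(\<lambda>f. c * \<psi> f) \<in> pow_dom cdual (adj_dom D A) (adj D A) k"
proof (induction k arbitrary: c)
  have pc: "\<psi> \<in> cdual" using psi unfolding adj_dom_def by blast
  case 0 then show ?case using cdual_cmult[OF pc] by simp
next
  case (Suc k)
  have pc: "\<psi> \<in> cdual" using psi unfolding adj_dom_def by blast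
  have pA: "\<forall>f\<in>D. \<psi> (A f) = lam * \<psi> f" using adj_prop[OF dense psi] adjpsi by simp
  have eq: "\<forall>f\<in>D. c * \<psi> (A f) = (c * lam) * \<psi> f" using pA by simp
  have in_dom: "(\<lambda>f. c * \<psi> f) \<in> adj_dom D A"
    unfolding adj_dom_def using cdual_cmult[OF pc, of c] cdual_cmult[OF pc, of "c * lam"] eq
    by (intro CollectI conjI bexI[of _ "\<lambda>f. (c * lam) * \<psi> f"]) simp_all
  have "adj D A (\<lambda>f. c * \<psi> f) = (\<lambda>f. (c * lam) * \<psi> f)"
    by (rule adj_eq[OF dense cdual_cmult[OF pc] cdual_cmult[OF pc]]) (use eq in simp)
  then show ?case using in_dom Suc[of "c * lam"] by simp
qed

lemma res_identity:
  assumes a: "complex_of_real \<mu> \<in> resolvent_set D A" and b: "complex_of_real \<mu>0 \<in> resolvent_set D A"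
  shows "resolvent D A \<mu> f = resolvent D A \<mu>0 f + (\<mu>0 - \<mu>) *\<^sub>R resolvent D A \<mu>0 (resolvent D A \<mu> f)"
proof -
  interpret a: resolv D A \<mu> by unfold_locales (rule a)
  interpret b: resolv D A \<mu>0 by unfold_locales (rule b)
  define g where "g = a.R f"
  have gD: "g \<in> D" and ge: "\<mu> *\<^sub>R g - A g = f" unfolding g_def using a.R_in a.R_eq by auto
  have "\<mu>0 *\<^sub>R g - A g = f + (\<mu>0 - \<mu>) *\<^sub>R g" using ge by (simp add: algebra_simps)
  then have "b.R (f + (\<mu>0 - \<mu>) *\<^sub>R g) = g" using b.R_uniq[OF gD] by simp
  then show ?thesis unfolding g_def by (simp add: b.R_add b.R_scaleR)
qed

lemma res_commute:
  assumes a: "complex_of_real \<mu> \<in> resolvent_set D A" and b: "complex_of_real \<mu>0 \<in> resolvent_set D A"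
  shows "resolvent D A \<mu>0 (resolvent D A \<mu> f) = resolvent D A \<mu> (resolvent D A \<mu>0 f)"
proof (cases "\<mu> = \<mu>0")
  case True then show ?thesis by simp
next
  case False
  have 1: "resolvent D A \<mu> f - resolvent D A \<mu>0 f = (\<mu>0 - \<mu>) *\<^sub>R resolvent D A \<mu>0 (resolvent D A \<mu> f)"
    using res_identity[OF a b, of f] by (simp add: algebra_simps)
  have 2: "resolvent D A \<mu>0 f - resolvent D A \<mu> f = (\<mu> - \<mu>0) *\<^sub>R resolvent D A \<mu> (resolvent D A \<mu>0 f)"
    using res_identity[OF b a, of f] by (simp add: algebra_simps)
  have "(\<mu>0 - \<mu>) *\<^sub>R resolvent D A \<mu>0 (resolvent D A \<mu> f) = (\<mu>0 - \<mu>) *\<^sub>R resolvent D A \<mu> (resolvent D A \<mu>0 f)"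
    using 1 2 by (metis minus_diff_eq scaleR_minus_left)
  then show ?thesis using False by simp
qed

end

context resolv begin

lemma cdual_Rpow: assumes "x' \<in> cdual" shows "(\<lambda>f. x' ((R ^^ k) f)) \<in> cdual"
  unfolding cdual_def
proof (intro CollectI conjI allI)
  fix f g show "x' ((R ^^ k) (f + g)) = x' ((R ^^ k) f) + x' ((R ^^ k) g)"
    using cdualD(1)[OF assms] by (simp add: R_pow_add)
next
  fix c f show "x' ((R ^^ k) (cscale c f)) = c * x' ((R ^^ k) f)"
    using cdualD(2)[OF assms] by (simp add: R_pow_cscale)
next
  show "continuous_on UNIV (\<lambda>f. x' ((R ^^ k) f))"
    by (rule continuous_on_compose2[OF cdualD(3)[OF assms] R_pow_cont]) simp
qed

lemma pow_dom_dual: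
  assumes dense: "densely_defined D" and x: "x' \<in> cdual"
  shows "(\<lambda>f. x' ((R ^^ k) f)) \<in> pow_dom cdual (adj_dom D A) (adj D A) k"
  using x
proof (induction k arbitrary: x')
  case 0 then show ?case by simp
next
  case (Suc k)
  define X where "X = (\<lambda>f. x' ((R ^^ Suc k) f))"
  define x'' where "x'' = (\<lambda>g. complex_of_real \<mu> * x' (R g) + (-1) * x' g)"
  have x''c: "x'' \<in> cdual" unfolding x''_def by (rule cdual_lin[OF cdual_Rpow[OF Suc.prems, of 1] Suc.prems, simplified])
  define Y where "Y = (\<lambda>f. x'' ((R ^^ k) f))"
  have Xc: "X \<in> cdual" unfolding X_def by (rule cdual_Rpow[OF Suc.prems])
  have Yc: "Y \<in> cdual" unfolding Y_def by (rule cdual_Rpow[OF x''c])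
  have eq: "\<forall>f\<in>D. X (A f) = Y f"
  proof
    fix f assume f: "f \<in> D"
    have "(R ^^ Suc k) (A f) = (R ^^ k) (R (A f))" by (simp only: funpow_Suc_right o_apply)
    also have "\<dots> = \<mu> *\<^sub>R (R ^^ k) (R f) - (R ^^ k) f" using R_A[OF f] by (simp add: R_pow_diff R_pow_scaleR)
    finally have "X (A f) = \<mu> * x' ((R ^^ k) (R f)) - x' ((R ^^ k) f)"
      unfolding X_def using cdual_diff[OF Suc.prems] cdual_scaleR[OF Suc.prems] by simp
    moreover have "Y f = \<mu> * x' (R ((R ^^ k) f)) - x' ((R ^^ k) f)" unfolding Y_def x''_def by simp
    moreover have "R ((R ^^ k) f) = (R ^^ k) (R f)" by (simp add: funpow_swap1)
    ultimately show "X (A f) = Y f" by simp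
  qed
  have XD: "X \<in> adj_dom D A" unfolding adj_dom_def using Xc Yc eq by blast
  have "adj D A X = Y" by (rule adj_eq[OF dense Xc Yc eq])
  moreover have "Y \<in> pow_dom cdual (adj_dom D A) (adj D A) k" unfolding Y_def by (rule Suc.IH[OF x''c])
  ultimately show ?case using XD unfolding X_def by simp
qed

lemma eig_R:
  assumes vD: "(v, 0) \<in> D" and Av: "A (v, 0) = lam *\<^sub>R (v, 0)" and v: "v \<noteq> 0"
  shows "\<mu> \<noteq> lam \<and> r v = (1 / (\<mu> - lam)) *\<^sub>R v"
proof -
  have "\<mu> *\<^sub>R (v, 0) - A (v, 0) = (\<mu> - lam) *\<^sub>R (v, 0)" using Av by (simp add: algebra_simps)
  then have h: "R ((\<mu> - lam) *\<^sub>R (v, 0)) = (v, 0)" using R_inv[OF vD] by simp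
  have "(\<mu> - lam) *\<^sub>R R (v, 0) = (v, 0)" using h R_scaleR[of "\<mu> - lam" "(v,0)"] by simp
  then have e: "(\<mu> - lam) *\<^sub>R (r v, 0::'a) = (v, 0)" unfolding R_pair .
  then have ne: "\<mu> \<noteq> lam" using v by auto
  from e have "(\<mu> - lam) *\<^sub>R r v = v" by simp
  then have "(1 / (\<mu> - lam)) *\<^sub>R ((\<mu> - lam) *\<^sub>R r v) = (1 / (\<mu> - lam)) *\<^sub>R v" by simp
  then have "r v = (1 / (\<mu> - lam)) *\<^sub>R v" using ne by simp
  with ne show ?thesis by simp
qed

lemma eig_dual:
  fixes \<psi> :: "'a \<times> 'a \<Rightarrow> complex" and lam :: real
  assumes pc: "\<psi> \<in> cdual" and pA: "\<forall>f\<in>D. \<psi> (A f) = complex_of_real lam * \<psi> f"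
  shows "\<psi> f = complex_of_real (\<mu> - lam) * \<psi> (R f)"
proof -
  have "\<psi> f = \<psi> (\<mu> *\<^sub>R R f - A (R f))" using R_eq by simp
  also have "\<dots> = \<mu> * \<psi> (R f) - lam * \<psi> (R f)" using cdual_diff[OF pc] cdual_scaleR[OF pc] pA R_in by simp
  finally show ?thesis by (simp add: algebra_simps)
qed

end


lemma linear_funpow: fixes f :: "'a::real_vector \<Rightarrow> 'a" assumes "linear f" shows "linear (f ^^ n)"
proof (rule linearI)
  fix x y show "(f ^^ n) (x + y) = (f ^^ n) x + (f ^^ n) y" by (induction n) (simp_all add: linear_add[OF assms])
next
  fix c x show "(f ^^ n) (c *\<^sub>R x) = c *\<^sub>R (f ^^ n) x" by (induction n) (simp_all add: linear_scale[OF assms])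
qed

lemma cont_funpow: fixes f :: "'a::topological_space \<Rightarrow> 'a" shows "continuous_on UNIV f \<Longrightarrow> continuous_on UNIV (f ^^ n)"
proof (induction n)
  case 0 then show ?case by (simp add: continuous_on_id)
next
  case (Suc n)
  have "continuous_on UNIV (f \<circ> (f ^^ n))"
    by (rule continuous_on_compose[OF Suc.IH[OF Suc.prems]]) (use Suc.prems continuous_on_subset in blast)
  then show ?case by simp
qed

lemma neg_funpow:
  fixes r :: "'a::real_vector \<Rightarrow> 'a"
  assumes "linear r" shows "((\<lambda>x. - r x) ^^ n) y = ((-1::real) ^ n) *\<^sub>R (r ^^ n) y"
proof (induction n)
  case 0 then show ?case by simp
next
  case (Suc n)
  have "((\<lambda>x. - r x) ^^ Suc n) y = - r (((-1::real) ^ n) *\<^sub>R (r ^^ n) y)" using Suc by simp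
  also have "\<dots> = ((-1::real) ^ Suc n) *\<^sub>R (r ^^ Suc n) y" by (simp add: linear_scale[OF assms])
  finally show ?case .
qed

lemma lin_cont_bounded:
  fixes f :: "'a::real_normed_vector \<Rightarrow> 'b::real_normed_vector"
  assumes lin: "linear f" and cont: "continuous_on UNIV f"
  shows "\<exists>B\<ge>0. \<forall>y. norm (f y) \<le> B * norm y"
proof -
  have "isCont f 0" using cont by (simp add: continuous_on_eq_continuous_at)
  then obtain d where d: "d > 0" "\<forall>x. dist x 0 < d \<longrightarrow> dist (f x) (f 0) < 1"
    unfolding continuous_at_eps_delta by (meson zero_less_one)
  have f0: "f 0 = 0" by (rule linear_0[OF lin])
  have "norm (f y) \<le> (2 / d) * norm y" for y
  proof (cases "y = 0")
    case True then show ?thesis using f0 by simp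
  next
    case False
    define s where "s = d / (2 * norm y)"
    have s0: "s > 0" unfolding s_def using d False by simp
    have "norm (s *\<^sub>R y) = d / 2" unfolding s_def using False d by simp
    then have "norm (f (s *\<^sub>R y)) < 1" using d f0 by (simp add: dist_norm)
    then have "s * norm (f y) < 1" using s0 by (simp add: linear_scale[OF lin])
    then have "norm (f y) < 1 / s" using s0 by (simp add: field_simps)
    also have "1 / s = (2 / d) * norm y" unfolding s_def using d False by simp
    finally show ?thesis by simp
  qed
  moreover have "2 / d \<ge> 0" using d by simp
  ultimately show ?thesis by blast
qed

lemma expand_res:
  fixes s0 sm :: "'a::ordered_real_vector \<Rightarrow> 'a" and ph :: "'a \<Rightarrow> real"
  assumes ls0: "linear s0" and t: "0 \<le> t"
    and ident: "\<forall>x. sm x = s0 x + t *\<^sub>R s0 (sm x)"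
    and powb: "\<forall>k. \<exists>K. \<forall>x\<ge>0. -((K * ph x) *\<^sub>R u) \<le> (s0 ^^ k) x"
    and rem: "\<forall>x\<ge>0. -((K3 * ph x) *\<^sub>R u) \<le> (s0 ^^ N) (sm x)"
  shows "\<exists>K. \<forall>x\<ge>0. -((K * ph x) *\<^sub>R u) \<le> sm x"
proof -
  have claim: "\<exists>K. \<forall>x\<ge>0. -((K * ph x) *\<^sub>R u) \<le> sm x - (t ^ n) *\<^sub>R (s0 ^^ n) (sm x)" for n
  proof (induction n)
    case 0 then show ?case by (intro exI[of _ 0]) simp
  next
    case (Suc n)
    obtain K where K: "\<forall>x\<ge>0. -((K * ph x) *\<^sub>R u) \<le> sm x - (t ^ n) *\<^sub>R (s0 ^^ n) (sm x)" using Suc by blast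
    obtain K' where K': "\<forall>x\<ge>0. -((K' * ph x) *\<^sub>R u) \<le> (s0 ^^ Suc n) x" using powb by blast
    have lp: "linear (s0 ^^ n)" by (rule linear_funpow[OF ls0])
    have "-(((K + t ^ n * K') * ph x) *\<^sub>R u) \<le> sm x - (t ^ Suc n) *\<^sub>R (s0 ^^ Suc n) (sm x)"
      if x: "0 \<le> x" for x
    proof -
      have sw: "(s0 ^^ n) (s0 y) = (s0 ^^ Suc n) y" for y by (simp only: funpow_Suc_right o_apply)
      have e: "(s0 ^^ n) (sm x) = (s0 ^^ Suc n) x + t *\<^sub>R (s0 ^^ Suc n) (sm x)"
      proof -
        have "(s0 ^^ n) (sm x) = (s0 ^^ n) (s0 x + t *\<^sub>R s0 (sm x))" using ident by metis
        also have "\<dots> = (s0 ^^ n) (s0 x) + t *\<^sub>R (s0 ^^ n) (s0 (sm x))"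
          by (simp add: linear_add[OF lp] linear_scale[OF lp])
        finally show ?thesis by (simp only: sw)
      qed
      have eq: "sm x - (t ^ Suc n) *\<^sub>R (s0 ^^ Suc n) (sm x)
          = (sm x - (t ^ n) *\<^sub>R (s0 ^^ n) (sm x)) + (t ^ n) *\<^sub>R (s0 ^^ Suc n) x"
      proof -
        have e2: "(t ^ n) *\<^sub>R (s0 ^^ n) (sm x) = (t ^ n) *\<^sub>R (s0 ^^ Suc n) x + (t ^ Suc n) *\<^sub>R (s0 ^^ Suc n) (sm x)"
          unfolding e scaleR_add_right scaleR_scaleR by (simp only: power_Suc2)
        have gen: "\<And>a b c d::'a. b = c + d \<Longrightarrow> a - d = (a - b) + c" by (simp add: algebra_simps)
        show ?thesis by (rule gen[OF e2])
      qed
      have b1: "-((K * ph x) *\<^sub>R u) \<le> sm x - (t ^ n) *\<^sub>R (s0 ^^ n) (sm x)" using K x by blast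
      have b2: "(t ^ n) *\<^sub>R (-((K' * ph x) *\<^sub>R u)) \<le> (t ^ n) *\<^sub>R (s0 ^^ Suc n) x"
        by (rule scaleR_left_mono) (use K' x t in auto)
      have "-((K * ph x) *\<^sub>R u) + (t ^ n) *\<^sub>R (-((K' * ph x) *\<^sub>R u))
          \<le> (sm x - (t ^ n) *\<^sub>R (s0 ^^ n) (sm x)) + (t ^ n) *\<^sub>R (s0 ^^ Suc n) x"
        by (rule add_mono[OF b1 b2])
      moreover have "-((K * ph x) *\<^sub>R u) + (t ^ n) *\<^sub>R (-((K' * ph x) *\<^sub>R u)) = -(((K + t ^ n * K') * ph x) *\<^sub>R u)"
        by (simp add: algebra_simps scaleR_add_left)
      ultimately show ?thesis unfolding eq by simp
    qed
    then show ?case by blast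
  qed
  obtain K where K: "\<forall>x\<ge>0. -((K * ph x) *\<^sub>R u) \<le> sm x - (t ^ N) *\<^sub>R (s0 ^^ N) (sm x)" using claim by blast
  have "-(((K + t ^ N * K3) * ph x) *\<^sub>R u) \<le> sm x" if x: "0 \<le> x" for x
  proof -
    have b1: "-((K * ph x) *\<^sub>R u) \<le> sm x - (t ^ N) *\<^sub>R (s0 ^^ N) (sm x)" using K x by blast
    have b2: "(t ^ N) *\<^sub>R (-((K3 * ph x) *\<^sub>R u)) \<le> (t ^ N) *\<^sub>R (s0 ^^ N) (sm x)"
      by (rule scaleR_left_mono) (use rem x t in auto)
    have "-((K * ph x) *\<^sub>R u) + (t ^ N) *\<^sub>R (-((K3 * ph x) *\<^sub>R u))
        \<le> (sm x - (t ^ N) *\<^sub>R (s0 ^^ N) (sm x)) + (t ^ N) *\<^sub>R (s0 ^^ N) (sm x)"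
      by (rule add_mono[OF b1 b2])
    moreover have "-((K * ph x) *\<^sub>R u) + (t ^ N) *\<^sub>R (-((K3 * ph x) *\<^sub>R u)) = -(((K + t ^ N * K3) * ph x) *\<^sub>R u)"
      by (simp add: algebra_simps scaleR_add_left)
    ultimately show ?thesis by simp
  qed
  then show ?thesis by blast
qed

lemma pow_from_pos:
  fixes r :: "'a::ordered_real_vector \<Rightarrow> 'a" and ph ps :: "'a \<Rightarrow> real"
  assumes lr: "linear r" and lph: "linear ph" and lps: "linear ps" and phpos: "\<forall>x\<ge>0. 0 \<le> ph x"
    and u: "0 \<le> u" and ep: "0 < \<epsilon>" and vu: "\<epsilon> *\<^sub>R u \<le> v" and vM: "v \<le> M *\<^sub>R u"
    and psb: "\<forall>x\<ge>0. \<epsilon> * ph x \<le> ps x \<and> ps x \<le> M * ph x"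
    and ev: "r v = \<kappa> *\<^sub>R v" and evd: "\<forall>x. ps (r x) = \<kappa> * ps x"
    and pos: "\<forall>x\<ge>0. 0 \<le> \<sigma> *\<^sub>R r x + (c * ph x) *\<^sub>R u"
  shows "\<exists>K. \<forall>x\<ge>0. -((K * ph x) *\<^sub>R u) \<le> ((\<lambda>x. \<sigma> *\<^sub>R r x) ^^ n) x"
proof (rule pow_bound[OF _ lph lps phpos u ep vu vM psb])
  show "linear (\<lambda>x. \<sigma> *\<^sub>R r x)" using lr by (simp add: linear_compose_scale_right)
  show "\<sigma> *\<^sub>R r v = (\<sigma> * \<kappa>) *\<^sub>R v" using ev by simp
  show "\<forall>x. ps (\<sigma> *\<^sub>R r x) = (\<sigma> * \<kappa>) * ps x" using evd by (simp add: linear_scale[OF lps])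
  show "0 \<le> max c 0" by simp
  show "\<forall>x\<ge>0. 0 \<le> \<sigma> *\<^sub>R r x + (max c 0 * ph x) *\<^sub>R u"
  proof (intro allI impI)
    fix x :: 'a assume x: "0 \<le> x"
    have "(c * ph x) *\<^sub>R u \<le> (max c 0 * ph x) *\<^sub>R u"
      by (rule scaleR_right_mono[OF _ u]) (use phpos x in \<open>simp add: mult_right_mono\<close>)
    then show "0 \<le> \<sigma> *\<^sub>R r x + (max c 0 * ph x) *\<^sub>R u" using pos x by (meson add_left_mono order_trans)
  qed
qed


lemma succ_neg_intro:
  fixes T Tn :: "'a::ordered_real_vector \<times> 'a \<Rightarrow> 'a \<times> 'a"
  assumes Tp: "\<forall>x\<ge>0. T (x, 0) = (t x, 0)" and tp: "\<forall>x. Tn (x, 0) = (ph x *\<^sub>R u, 0)"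
    and phpos: "\<forall>x\<ge>0. 0 \<le> ph x" and u: "0 \<le> u" and bnd: "\<forall>x\<ge>0. -((K * ph x) *\<^sub>R u) \<le> t x"
  shows "op_succeq T (\<lambda>f. - Tn f)"
proof -
  define c where "c = max K 1"
  have c0: "c > 0" unfolding c_def by simp
  have "pos_op (\<lambda>f. T f - c *\<^sub>R (- Tn f))" unfolding pos_op_def
  proof (intro allI impI conjI)
    fix x :: 'a assume x: "0 \<le> x"
    show "snd (T (x, 0) - c *\<^sub>R (- Tn (x, 0))) = 0" using Tp tp x by simp
    have e: "fst (T (x, 0) - c *\<^sub>R (- Tn (x, 0))) = t x + (c * ph x) *\<^sub>R u" using Tp tp x by simp
    have h1: "0 \<le> ((c - K) * ph x) *\<^sub>R u"
      by (rule scaleR_nonneg_nonneg) (use c_def phpos x u in auto)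
    have h2: "((c - K) * ph x) *\<^sub>R u = -((K * ph x) *\<^sub>R u) + (c * ph x) *\<^sub>R u"
      by (simp add: algebra_simps scaleR_diff_left)
    have h3: "-((K * ph x) *\<^sub>R u) + (c * ph x) *\<^sub>R u \<le> t x + (c * ph x) *\<^sub>R u"
      using bnd x by (intro add_right_mono) simp
    show "0 \<le> fst (T (x, 0) - c *\<^sub>R (- Tn (x, 0)))" unfolding e using order_trans[OF h1[unfolded h2] h3] .
  qed
  then show ?thesis unfolding op_succeq_def using c0 by blast
qed

lemma succ_tensor_intro:
  fixes T Tn :: "'a::ordered_real_vector \<times> 'a \<Rightarrow> 'a \<times> 'a"
  assumes Tp: "\<forall>x\<ge>0. T (x, 0) = (t x, 0)" and tp: "\<forall>x. Tn (x, 0) = (ph x *\<^sub>R u, 0)"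
    and phpos: "\<forall>x\<ge>0. 0 \<le> ph x" and u: "0 \<le> u" and bnd: "\<forall>x\<ge>0. t x \<le> (K * ph x) *\<^sub>R u"
  shows "op_succeq Tn T"
proof -
  define c where "c = 1 / max K 1"
  have c0: "c > 0" unfolding c_def by simp
  have cK: "c * K \<le> 1" unfolding c_def by (simp add: field_simps)
  have "pos_op (\<lambda>f. Tn f - c *\<^sub>R T f)" unfolding pos_op_def
  proof (intro allI impI conjI)
    fix x :: 'a assume x: "0 \<le> x"
    show "snd (Tn (x, 0) - c *\<^sub>R T (x, 0)) = 0" using Tp tp x by simp
    have e: "fst (Tn (x, 0) - c *\<^sub>R T (x, 0)) = ph x *\<^sub>R u - c *\<^sub>R t x" using Tp tp x by simp
    have "c *\<^sub>R t x \<le> c *\<^sub>R ((K * ph x) *\<^sub>R u)" by (rule scaleR_left_mono) (use bnd x c0 in auto)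
    also have "\<dots> = ((c * K) * ph x) *\<^sub>R u" by simp
    also have "\<dots> \<le> ph x *\<^sub>R u"
      by (rule scaleR_right_mono[OF _ u]) (use mult_right_mono[OF cK, of "ph x"] phpos x in simp)
    finally show "0 \<le> fst (Tn (x, 0) - c *\<^sub>R T (x, 0))" unfolding e by simp
  qed
  then show ?thesis unfolding op_succeq_def using c0 by blast
qed

lemma succ_neg_elim:
  fixes T Tn :: "'a::ordered_real_vector \<times> 'a \<Rightarrow> 'a \<times> 'a"
  assumes h: "op_succeq T (\<lambda>f. - Tn f)" and Tp: "\<forall>x. T (x, 0) = (t x, 0)" and tp: "\<forall>x. Tn (x, 0) = (ph x *\<^sub>R u, 0)"
  shows "\<exists>c. \<forall>x\<ge>0. 0 \<le> 1 *\<^sub>R t x + (c * ph x) *\<^sub>R u"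
proof -
  obtain c where c: "c > 0" "pos_op (\<lambda>f. T f - c *\<^sub>R (- Tn f))" using h unfolding op_succeq_def by blast
  have "0 \<le> 1 *\<^sub>R t x + (c * ph x) *\<^sub>R u" if "0 \<le> x" for x
    using c(2) that Tp tp unfolding pos_op_def by force
  then show ?thesis by blast
qed

lemma succ_tensor_elim:
  fixes T Tn :: "'a::ordered_real_vector \<times> 'a \<Rightarrow> 'a \<times> 'a"
  assumes h: "op_succeq Tn T" and Tp: "\<forall>x. T (x, 0) = (t x, 0)" and tp: "\<forall>x. Tn (x, 0) = (ph x *\<^sub>R u, 0)"
  shows "\<exists>c. \<forall>x\<ge>0. 0 \<le> (-1) *\<^sub>R t x + (c * ph x) *\<^sub>R u"
proof -
  obtain c where c: "c > 0" "pos_op (\<lambda>f. Tn f - c *\<^sub>R T f)" using h unfolding op_succeq_def by blast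
  have "0 \<le> (-1) *\<^sub>R t x + ((1/c) * ph x) *\<^sub>R u" if x: "0 \<le> x" for x
  proof -
    have "0 \<le> ph x *\<^sub>R u - c *\<^sub>R t x" using c(2) x Tp tp unfolding pos_op_def by force
    then have "0 \<le> (1/c) *\<^sub>R (ph x *\<^sub>R u - c *\<^sub>R t x)" using c(1) by (simp add: scaleR_nonneg_nonneg)
    also have "(1/c) *\<^sub>R (ph x *\<^sub>R u - c *\<^sub>R t x) = (-1) *\<^sub>R t x + ((1/c) * ph x) *\<^sub>R u"
      using c(1) by (simp add: scaleR_diff_right algebra_simps)
    finally show ?thesis .
  qed
  then show ?thesis by blast
qed

theorem theorem4p5:
  fixes D :: "('a::{banach,ordered_real_vector,lattice} \<times> 'a) set"
    and A :: "'a \<times> 'a \<Rightarrow> 'a \<times> 'a"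
    and u :: 'a
    and \<phi> :: "'a \<times> 'a \<Rightarrow> complex"
    and m1 m2 :: nat
    and lam0 \<mu>0 \<mu> :: real
  assumes BL: "banach_lattice TYPE('a)"
    and lin: "linear_op D A"
    and dense: "densely_defined D"
    and closed: "closed_op D A"
    and real: "real_op D A"
    and u_pos: "0 \<le> u"
    and \<phi>_dual: "\<phi> \<in> cdual"
    and \<phi>_pos: "dual_pos \<phi>"
    and \<phi>_strict: "strictly_positive \<phi>"
    and dom1: "pow_dom UNIV D A m1 \<subseteq> ideal_gen u"
    and dom2: "pow_dom cdual (adj_dom D A) (adj D A) m2 \<subseteq> dual_ideal_gen \<phi>"
    and eig: "\<exists>v. v \<noteq> 0 \<and> vec_succeq v u \<and>
               eigenspace_op D A cscale (complex_of_real lam0) = range (\<lambda>c. cscale c (v, 0))"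
    and eig': "\<exists>\<psi>. \<psi> \<noteq> (\<lambda>_. 0) \<and>
               \<psi> \<in> eigenspace_op (adj_dom D A) (adj D A) (\<lambda>c g f. c * g f) (complex_of_real lam0)
               \<and> dual_real \<psi> \<and> dual_succeq \<psi> \<phi>"
    and \<mu>0_res: "complex_of_real \<mu>0 \<in> resolvent_set D A"
    and \<mu>_res: "complex_of_real \<mu> \<in> resolvent_set D A"
  shows "(op_succeq (resolvent D A (complex_of_real \<mu>0)) (\<lambda>f. - tensor u \<phi> f) \<and> \<mu> \<le> \<mu>0 \<longrightarrow>
            op_succeq (resolvent D A (complex_of_real \<mu>)) (\<lambda>f. - tensor u \<phi> f) \<and>
            (\<forall>n\<ge>1. op_succeq (resolvent D A (complex_of_real \<mu>) ^^ n) (\<lambda>f. - tensor u \<phi> f)))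
       \<and> (op_succeq (tensor u \<phi>) (resolvent D A (complex_of_real \<mu>0)) \<and> \<mu> \<ge> \<mu>0 \<longrightarrow>
            op_succeq (tensor u \<phi>) (resolvent D A (complex_of_real \<mu>)) \<and>
            (\<forall>n\<ge>1. op_succeq (tensor u \<phi>)
                      (\<lambda>f. ((-1::real) ^ (n - 1)) *\<^sub>R (resolvent D A (complex_of_real \<mu>) ^^ n) f)))"
proof -
  have E: "resop D A" by (rule resop.intro[OF lin real])
  interpret E: resop D A by (rule E)
  interpret R0: resolv D A \<mu>0 by (rule resolv.intro[OF E resolv_axioms.intro[OF \<mu>0_res]])
  interpret Rm: resolv D A \<mu> by (rule resolv.intro[OF E resolv_axioms.intro[OF \<mu>_res]])
  define ph where "ph x = Re (\<phi> (x, 0))" for x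
  have \<phi>real: "\<phi> (x, 0) = complex_of_real (ph x)" for x
    using \<phi>_pos unfolding dual_pos_def dual_real_def ph_def by (simp add: complex_eq_iff)
  have lph: "linear ph"
  proof (rule linearI)
    fix x y show "ph (x + y) = ph x + ph y" unfolding ph_def using cdualD(1)[OF \<phi>_dual, of "(x,0)" "(y,0)"] by simp
  next
    fix c x show "ph (c *\<^sub>R x) = c *\<^sub>R ph x" unfolding ph_def using cdual_scaleR[OF \<phi>_dual, of c "(x,0)"] by simp
  qed
  have phpos: "\<forall>x\<ge>0. 0 \<le> ph x" using \<phi>_pos unfolding dual_pos_def ph_def by blast
  have tp: "\<forall>x. tensor u \<phi> (x, 0) = (ph x *\<^sub>R u, 0)"
    unfolding tensor_def cscale_real_pair \<phi>real by simp

  obtain v where v0: "v \<noteq> 0" and vsucc: "vec_succeq v u"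
    and vsp: "eigenspace_op D A cscale (complex_of_real lam0) = range (\<lambda>c. cscale c (v, 0))" using eig by blast
  have c1: "cscale 1 (v, 0::'a) = (v, 0)" by (simp add: cscale_def)
  have "(v, 0) \<in> range (\<lambda>c. cscale c (v, 0::'a))" by (rule image_eqI[of _ _ 1]) (simp_all add: c1)
  then have "(v,0) \<in> eigenspace_op D A cscale (complex_of_real lam0)" using vsp by simp
  then have vD: "(v, 0) \<in> D" and Av0: "cscale (complex_of_real lam0) (v, 0) = A (v, 0)"
    unfolding eigenspace_op_def by auto
  have Av: "A (v, 0) = lam0 *\<^sub>R (v, 0)" using Av0 by (simp only: cscale_real eq_commute)
  obtain \<epsilon>v where \<epsilon>v: "\<epsilon>v > 0" "\<epsilon>v *\<^sub>R u \<le> v" using vsucc unfolding vec_succeq_def by blast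
  have "cscale 1 (v, 0) \<in> pow_dom UNIV D A m1" by (rule E.pow_dom_eigv[OF vD Av])
  then have "(v, 0) \<in> ideal_gen u" using dom1 c1 by auto
  then obtain Mv where Mv: "Mv \<ge> 0" "labs v \<le> Mv *\<^sub>R u" unfolding ideal_gen_def by auto
  have vMv: "v \<le> Mv *\<^sub>R u" using Mv(2) labs_le_iff by blast

  obtain \<psi> where \<psi>e: "\<psi> \<in> eigenspace_op (adj_dom D A) (adj D A) (\<lambda>c g f. c * g f) (complex_of_real lam0)"
    and \<psi>r: "dual_real \<psi>" and \<psi>s: "dual_succeq \<psi> \<phi>" using eig' by blast
  have \<psi>D: "\<psi> \<in> adj_dom D A" and adj\<psi>: "adj D A \<psi> = (\<lambda>f. complex_of_real lam0 * \<psi> f)"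
    using \<psi>e unfolding eigenspace_op_def by auto
  have \<psi>c: "\<psi> \<in> cdual" using \<psi>D unfolding adj_dom_def by blast
  have pA: "\<forall>f\<in>D. \<psi> (A f) = complex_of_real lam0 * \<psi> f" using E.adj_prop[OF dense \<psi>D] adj\<psi> by simp
  define ps where "ps x = Re (\<psi> (x, 0))" for x
  have \<psi>real: "\<psi> (x, 0) = complex_of_real (ps x)" for x
    using \<psi>r unfolding dual_real_def ps_def by (simp add: complex_eq_iff)
  have lps: "linear ps"
  proof (rule linearI)
    fix x y show "ps (x + y) = ps x + ps y" unfolding ps_def using cdualD(1)[OF \<psi>c, of "(x,0)" "(y,0)"] by simp
  next
    fix c x show "ps (c *\<^sub>R x) = c *\<^sub>R ps x" unfolding ps_def using cdual_scaleR[OF \<psi>c, of c "(x,0)"] by simp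
  qed
  obtain \<epsilon>p where \<epsilon>p: "\<epsilon>p > 0" "\<forall>x\<ge>0. \<epsilon>p * ph x \<le> ps x"
  proof -
    obtain c where c: "c > 0" "dual_pos (\<lambda>f. \<psi> f - complex_of_real c * \<phi> f)" using \<psi>s unfolding dual_succeq_def by blast
    have "\<forall>x\<ge>0. c * ph x \<le> ps x" using c(2) unfolding dual_pos_def ps_def ph_def by simp
    then show ?thesis using c(1) that by blast
  qed
  have "(\<lambda>f. 1 * \<psi> f) \<in> pow_dom cdual (adj_dom D A) (adj D A) m2" by (rule E.pow_dom_eigd[OF dense \<psi>D adj\<psi>])
  then have "\<psi> \<in> dual_ideal_gen \<phi>" using dom2 by auto
  then obtain Mp where Mp: "Mp \<ge> 0" "\<forall>x. cmod (\<psi> (x, 0)) \<le> Mp * Re (\<phi> (labs x, 0))"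
    unfolding dual_ideal_gen_def by blast
  have psM: "ps x \<le> Mp * ph x" if x: "0 \<le> x" for x
  proof -
    have "ps x \<le> cmod (\<psi> (x, 0))" unfolding \<psi>real by simp
    also have "\<dots> \<le> Mp * Re (\<phi> (labs x, 0))" using Mp(2) by blast
    finally show ?thesis using labs_pos[OF x] ph_def by simp
  qed
  define \<epsilon> where "\<epsilon> = min \<epsilon>v \<epsilon>p"
  define M where "M = max Mv Mp"
  have \<epsilon>0: "\<epsilon> > 0" unfolding \<epsilon>_def using \<epsilon>v \<epsilon>p by simp
  have vu: "\<epsilon> *\<^sub>R u \<le> v"
    using order_trans[OF scaleR_right_mono[of \<epsilon> \<epsilon>v u] \<epsilon>v(2)] u_pos unfolding \<epsilon>_def by simp
  have vM: "v \<le> M *\<^sub>R u"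
    using order_trans[OF vMv scaleR_right_mono[of Mv M u]] u_pos unfolding M_def by simp
  have psb: "\<forall>x\<ge>0. \<epsilon> * ph x \<le> ps x \<and> ps x \<le> M * ph x"
  proof (intro allI impI conjI)
    fix x :: 'a assume x: "0 \<le> x"
    have p: "0 \<le> ph x" using phpos x by blast
    show "\<epsilon> * ph x \<le> ps x" using \<epsilon>p(2) x mult_right_mono[OF min.cobounded2 p, of \<epsilon>v \<epsilon>p] unfolding \<epsilon>_def by force
    show "ps x \<le> M * ph x" using psM[OF x] mult_right_mono[OF max.cobounded2 p, of Mp Mv] unfolding M_def by force
  qed

  have e0: "\<mu>0 \<noteq> lam0 \<and> R0.r v = (1 / (\<mu>0 - lam0)) *\<^sub>R v" by (rule R0.eig_R[OF vD Av v0])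
  have d0: "\<forall>x. ps (R0.r x) = (1 / (\<mu>0 - lam0)) * ps x"
  proof
    fix x
    have "\<psi> (x, 0) = complex_of_real (\<mu>0 - lam0) * \<psi> (R0.R (x, 0))" by (rule R0.eig_dual[OF \<psi>c pA])
    then have "complex_of_real (ps x) = complex_of_real (\<mu>0 - lam0) * complex_of_real (ps (R0.r x))"
      by (simp only: R0.R_pair \<psi>real)
    then have "complex_of_real (ps x) = complex_of_real ((\<mu>0 - lam0) * ps (R0.r x))" by (simp only: of_real_mult)
    then have "ps x = (\<mu>0 - lam0) * ps (R0.r x)" by (simp only: of_real_eq_iff)
    then show "ps (R0.r x) = (1 / (\<mu>0 - lam0)) * ps x" using e0 by (simp add: field_simps)
  qed
  have em: "\<mu> \<noteq> lam0 \<and> Rm.r v = (1 / (\<mu> - lam0)) *\<^sub>R v" by (rule Rm.eig_R[OF vD Av v0])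
  have dm: "\<forall>x. ps (Rm.r x) = (1 / (\<mu> - lam0)) * ps x"
  proof
    fix x
    have "\<psi> (x, 0) = complex_of_real (\<mu> - lam0) * \<psi> (Rm.R (x, 0))" by (rule Rm.eig_dual[OF \<psi>c pA])
    then have "complex_of_real (ps x) = complex_of_real (\<mu> - lam0) * complex_of_real (ps (Rm.r x))"
      by (simp only: Rm.R_pair \<psi>real)
    then have "complex_of_real (ps x) = complex_of_real ((\<mu> - lam0) * ps (Rm.r x))" by (simp only: of_real_mult)
    then have "ps x = (\<mu> - lam0) * ps (Rm.r x)" by (simp only: of_real_eq_iff)
    then show "ps (Rm.r x) = (1 / (\<mu> - lam0)) * ps x" using em by (simp add: field_simps)
  qed

  define F where "F = R0.r ^^ m1"
  define G where "G = R0.r ^^ m2"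
  have lF: "linear F" unfolding F_def by (rule linear_funpow[OF R0.r_linear])
  have cF: "continuous_on UNIV F" unfolding F_def by (rule cont_funpow[OF R0.r_cont])
  have covF: "\<exists>c. -(c *\<^sub>R u) \<le> F x \<and> F x \<le> c *\<^sub>R u" for x
  proof -
    have "(R0.R ^^ m1) (x, 0) \<in> pow_dom UNIV D A m1" by (rule R0.pow_dom_R)
    then have "(F x, 0) \<in> ideal_gen u" using dom1 unfolding F_def R0.R_pow_pair by blast
    then obtain c where "labs (F x) \<le> c *\<^sub>R u" unfolding ideal_gen_def by auto
    then have "F x \<le> c *\<^sub>R u" "- F x \<le> c *\<^sub>R u" using labs_le_iff by blast+
    then show ?thesis by (metis minus_le_iff)
  qed
  obtain K1 where K1: "K1 \<ge> 0" "\<forall>y. -((K1 * norm y) *\<^sub>R u) \<le> F y \<and> F y \<le> (K1 * norm y) *\<^sub>R u"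
    using bound_E[OF BL lF cF u_pos covF] by blast
  define xl where "xl l z = complex_of_real (blinfun_apply l (fst z)) + \<i> * complex_of_real (blinfun_apply l (snd z))"
    for l :: "'a \<Rightarrow>\<^sub>L real" and z :: "'a \<times> 'a"
  have xlc: "xl l \<in> cdual" for l
    unfolding cdual_def
  proof (intro CollectI conjI allI)
    fix f g show "xl l (f + g) = xl l f + xl l g" unfolding xl_def by (simp add: blinfun.add_right algebra_simps)
  next
    fix c f show "xl l (cscale c f) = c * xl l f" unfolding xl_def cscale_def
      by (simp add: blinfun.add_right blinfun.diff_right blinfun.scaleR_right complex_eq_iff algebra_simps)
  next
    have b1: "bounded_linear (\<lambda>z::'a\<times>'a. blinfun_apply l (fst z))" by (intro bounded_linear_intros)
    have b2: "bounded_linear (\<lambda>z::'a\<times>'a. blinfun_apply l (snd z))" by (intro bounded_linear_intros)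
    show "continuous_on UNIV (xl l)" unfolding xl_def
      by (intro continuous_intros linear_continuous_on[OF b1] linear_continuous_on[OF b2])
  qed
  have covG: "\<exists>c. \<forall>x. 0 \<le> x \<longrightarrow> \<bar>blinfun_apply l (G x)\<bar> \<le> c * ph x" for l
  proof -
    have "(\<lambda>f. xl l ((R0.R ^^ m2) f)) \<in> pow_dom cdual (adj_dom D A) (adj D A) m2"
      by (rule R0.pow_dom_dual[OF dense xlc])
    then have "(\<lambda>f. xl l ((R0.R ^^ m2) f)) \<in> dual_ideal_gen \<phi>" using dom2 by blast
    then obtain c where c: "\<forall>x. cmod (xl l ((R0.R ^^ m2) (x, 0))) \<le> c * Re (\<phi> (labs x, 0))"
      unfolding dual_ideal_gen_def by blast
    have "\<bar>blinfun_apply l (G x)\<bar> \<le> c * ph x" if x: "0 \<le> x" for x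
    proof -
      have "xl l ((R0.R ^^ m2) (x, 0)) = complex_of_real (blinfun_apply l (G x))"
        unfolding xl_def G_def R0.R_pow_pair by (simp add: blinfun.zero_right)
      then show ?thesis using c labs_pos[OF x] ph_def by (metis norm_of_real)
    qed
    then show ?thesis by blast
  qed
  have "\<exists>K\<ge>0. \<forall>x. 0 \<le> x \<longrightarrow> norm (G x) \<le> K * ph x"
    by (rule bound_dual[where P="\<lambda>x. 0 \<le> x"]) (use phpos covG in auto)
  then obtain K2 where K2: "K2 \<ge> 0" "\<forall>x. 0 \<le> x \<longrightarrow> norm (G x) \<le> K2 * ph x" by blast
  obtain B where B: "B \<ge> 0" "\<forall>y. norm (Rm.r y) \<le> B * norm y"
    using lin_cont_bounded[OF Rm.r_linear Rm.r_cont] by blast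
  define K3 where "K3 = K1 * B * K2"
  have comm: "R0.r (Rm.r x) = Rm.r (R0.r x)" for x
  proof -
    have "R0.R (Rm.R (x,0)) = Rm.R (R0.R (x,0))" by (rule E.res_commute[OF \<mu>_res \<mu>0_res])
    then show ?thesis by (simp add: R0.R_pair Rm.R_pair)
  qed
  have commpow: "(R0.r ^^ k) (Rm.r x) = Rm.r ((R0.r ^^ k) x)" for k x
    by (induction k) (simp_all add: comm)
  have ident: "\<forall>x. Rm.r x = R0.r x + (\<mu>0 - \<mu>) *\<^sub>R R0.r (Rm.r x)"
  proof
    fix x
    have "Rm.R (x,0) = R0.R (x,0) + (\<mu>0 - \<mu>) *\<^sub>R R0.R (Rm.R (x,0))" by (rule E.res_identity[OF \<mu>_res \<mu>0_res])
    then show "Rm.r x = R0.r x + (\<mu>0 - \<mu>) *\<^sub>R R0.r (Rm.r x)" by (simp add: R0.R_pair Rm.R_pair)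
  qed
  define N where "N = m1 + m2"
  have remb: "inband u ((R0.r ^^ N) (Rm.r x)) (K3 * ph x)" if x: "0 \<le> x" for x
  proof -
    have eq: "(R0.r ^^ N) (Rm.r x) = F (Rm.r (G x))" unfolding N_def F_def G_def by (simp add: funpow_add commpow)
    have "norm (Rm.r (G x)) \<le> B * norm (G x)" using B by blast
    also have "\<dots> \<le> B * (K2 * ph x)" using K2 x B(1) by (simp add: mult_left_mono)
    finally have "K1 * norm (Rm.r (G x)) \<le> K1 * (B * (K2 * ph x))" using K1(1) by (simp add: mult_left_mono)
    then have le: "K1 * norm (Rm.r (G x)) \<le> K3 * ph x" unfolding K3_def by (simp add: mult.assoc)
    have "inband u (F (Rm.r (G x))) (K1 * norm (Rm.r (G x)))" using K1(2) unfolding inband_def by blast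
    then show ?thesis unfolding eq by (rule band_mono[OF u_pos le])
  qed

  have partA: "op_succeq (resolvent D A (complex_of_real \<mu>0)) (\<lambda>f. - tensor u \<phi> f) \<and> \<mu> \<le> \<mu>0 \<longrightarrow>
            op_succeq (resolvent D A (complex_of_real \<mu>)) (\<lambda>f. - tensor u \<phi> f) \<and>
            (\<forall>n\<ge>1. op_succeq (resolvent D A (complex_of_real \<mu>) ^^ n) (\<lambda>f. - tensor u \<phi> f))"
  proof (intro impI)
    assume h: "op_succeq R0.R (\<lambda>f. - tensor u \<phi> f) \<and> \<mu> \<le> \<mu>0"
    obtain c where pos0: "\<forall>x\<ge>0. 0 \<le> 1 *\<^sub>R R0.r x + (c * ph x) *\<^sub>R u"
      using succ_neg_elim[of R0.R "tensor u \<phi>" R0.r ph u] h R0.R_pair tp by blast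
    have pow0: "\<forall>k. \<exists>K. \<forall>x\<ge>0. -((K * ph x) *\<^sub>R u) \<le> (R0.r ^^ k) x"
    proof
      fix k
      have "\<exists>K. \<forall>x\<ge>0. -((K * ph x) *\<^sub>R u) \<le> ((\<lambda>x. 1 *\<^sub>R R0.r x) ^^ k) x"
        by (rule pow_from_pos[OF R0.r_linear lph lps phpos u_pos \<epsilon>0 vu vM psb _ d0 pos0]) (use e0 in simp)
      then show "\<exists>K. \<forall>x\<ge>0. -((K * ph x) *\<^sub>R u) \<le> (R0.r ^^ k) x" by simp
    qed
    have t0: "0 \<le> \<mu>0 - \<mu>" using h by simp
    have rem: "\<forall>x\<ge>0. -((K3 * ph x) *\<^sub>R u) \<le> (R0.r ^^ N) (Rm.r x)" using remb band_lower by blast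
    obtain Km where Km: "\<forall>x\<ge>0. -((Km * ph x) *\<^sub>R u) \<le> Rm.r x"
      using expand_res[OF R0.r_linear t0 ident pow0 rem] by blast
    have posm: "\<forall>x\<ge>0. 0 \<le> 1 *\<^sub>R Rm.r x + (Km * ph x) *\<^sub>R u"
    proof (intro allI impI)
      fix x :: 'a assume x: "0 \<le> x"
      have "-((Km * ph x) *\<^sub>R u) \<le> Rm.r x" using Km x by blast
      then have "-((Km * ph x) *\<^sub>R u) + (Km * ph x) *\<^sub>R u \<le> Rm.r x + (Km * ph x) *\<^sub>R u" by (rule add_right_mono)
      then show "0 \<le> 1 *\<^sub>R Rm.r x + (Km * ph x) *\<^sub>R u" by simp
    qed
    have powm: "\<forall>n. \<exists>K. \<forall>x\<ge>0. -((K * ph x) *\<^sub>R u) \<le> (Rm.r ^^ n) x"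
    proof
      fix n
      have "\<exists>K. \<forall>x\<ge>0. -((K * ph x) *\<^sub>R u) \<le> ((\<lambda>x. 1 *\<^sub>R Rm.r x) ^^ n) x"
        by (rule pow_from_pos[OF Rm.r_linear lph lps phpos u_pos \<epsilon>0 vu vM psb _ dm posm]) (use em in simp)
      then show "\<exists>K. \<forall>x\<ge>0. -((K * ph x) *\<^sub>R u) \<le> (Rm.r ^^ n) x" by simp
    qed
    have "op_succeq Rm.R (\<lambda>f. - tensor u \<phi> f)"
      by (rule succ_neg_intro[where t = Rm.r and ph = ph and K = Km]) (use Rm.R_pair tp phpos u_pos Km in auto)
    moreover have "op_succeq (Rm.R ^^ n) (\<lambda>f. - tensor u \<phi> f)" for n
    proof -
      obtain K where K: "\<forall>x\<ge>0. -((K * ph x) *\<^sub>R u) \<le> (Rm.r ^^ n) x" using powm by blast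
      show ?thesis
        by (rule succ_neg_intro[where t = "Rm.r ^^ n" and ph = ph and K = K]) (use Rm.R_pow_pair tp phpos u_pos K in auto)
    qed
    ultimately show "op_succeq Rm.R (\<lambda>f. - tensor u \<phi> f) \<and> (\<forall>n\<ge>1. op_succeq (Rm.R ^^ n) (\<lambda>f. - tensor u \<phi> f))"
      by blast
  qed

  have partB: "op_succeq (tensor u \<phi>) (resolvent D A (complex_of_real \<mu>0)) \<and> \<mu> \<ge> \<mu>0 \<longrightarrow>
            op_succeq (tensor u \<phi>) (resolvent D A (complex_of_real \<mu>)) \<and>
            (\<forall>n\<ge>1. op_succeq (tensor u \<phi>)
                      (\<lambda>f. ((-1::real) ^ (n - 1)) *\<^sub>R (resolvent D A (complex_of_real \<mu>) ^^ n) f))"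
  proof (intro impI)
    assume h: "op_succeq (tensor u \<phi>) R0.R \<and> \<mu> \<ge> \<mu>0"
    obtain c where pos0: "\<forall>x\<ge>0. 0 \<le> (-1) *\<^sub>R R0.r x + (c * ph x) *\<^sub>R u"
      using succ_tensor_elim[of "tensor u \<phi>" R0.R R0.r ph u] h R0.R_pair tp by blast
    define s0 where "s0 = (\<lambda>x. (-1::real) *\<^sub>R R0.r x)"
    define sm where "sm = (\<lambda>x. (-1::real) *\<^sub>R Rm.r x)"
    have ls0: "linear s0" unfolding s0_def
      by (rule linearI) (simp_all add: linear_add[OF R0.r_linear] linear_scale[OF R0.r_linear])
    have pow0: "\<forall>k. \<exists>K. \<forall>x\<ge>0. -((K * ph x) *\<^sub>R u) \<le> (s0 ^^ k) x"
    proof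
      fix k
      show "\<exists>K. \<forall>x\<ge>0. -((K * ph x) *\<^sub>R u) \<le> (s0 ^^ k) x" unfolding s0_def
        by (rule pow_from_pos[OF R0.r_linear lph lps phpos u_pos \<epsilon>0 vu vM psb _ d0 pos0]) (use e0 in simp)
    qed
    have t0: "0 \<le> \<mu> - \<mu>0" using h by simp
    have identS: "\<forall>x. sm x = s0 x + (\<mu> - \<mu>0) *\<^sub>R s0 (sm x)"
    proof
      fix x
      have "Rm.r x = R0.r x + (\<mu>0 - \<mu>) *\<^sub>R R0.r (Rm.r x)" using ident by blast
      moreover have "R0.r ((-1::real) *\<^sub>R Rm.r x) = (-1::real) *\<^sub>R R0.r (Rm.r x)" by (rule linear_scale[OF R0.r_linear])
      ultimately show "sm x = s0 x + (\<mu> - \<mu>0) *\<^sub>R s0 (sm x)" unfolding s0_def sm_def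
        by (simp add: algebra_simps)
    qed
    have rem: "\<forall>x\<ge>0. -((K3 * ph x) *\<^sub>R u) \<le> (s0 ^^ N) (sm x)"
    proof (intro allI impI)
      fix x :: 'a assume x: "0 \<le> x"
      have s0e: "s0 = (\<lambda>x. - R0.r x)" unfolding s0_def by simp
      have "(s0 ^^ N) (sm x) = ((-1::real) ^ N) *\<^sub>R (R0.r ^^ N) (sm x)" unfolding s0e by (rule neg_funpow[OF R0.r_linear])
      also have "(R0.r ^^ N) (sm x) = - (R0.r ^^ N) (Rm.r x)"
        unfolding sm_def using linear_neg[OF linear_funpow[OF R0.r_linear, of N]] by simp
      finally have eq: "(s0 ^^ N) (sm x) = ((-1::real) ^ N) *\<^sub>R (- (R0.r ^^ N) (Rm.r x))" .
      have b: "inband u (- (R0.r ^^ N) (Rm.r x)) (K3 * ph x)" using band_neg remb[OF x] by blast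
      have "inband u (((-1::real) ^ N) *\<^sub>R (- (R0.r ^^ N) (Rm.r x))) (K3 * ph x)"
        by (cases "even N") (use b remb[OF x] in auto)
      then show "-((K3 * ph x) *\<^sub>R u) \<le> (s0 ^^ N) (sm x)" unfolding eq by (rule band_lower)
    qed
    obtain Km where Km: "\<forall>x\<ge>0. -((Km * ph x) *\<^sub>R u) \<le> sm x"
      using expand_res[OF ls0 t0 identS pow0 rem] by blast
    have Kmb: "\<forall>x\<ge>0. Rm.r x \<le> (Km * ph x) *\<^sub>R u" using Km unfolding sm_def by (simp add: minus_le_iff)
    have posm: "\<forall>x\<ge>0. 0 \<le> (-1) *\<^sub>R Rm.r x + (Km * ph x) *\<^sub>R u"
    proof (intro allI impI)
      fix x :: 'a assume x: "0 \<le> x"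
      have "Rm.r x \<le> (Km * ph x) *\<^sub>R u" using Kmb x by blast
      then have "Rm.r x + (- Rm.r x) \<le> (Km * ph x) *\<^sub>R u + (- Rm.r x)" by (rule add_right_mono)
      then show "0 \<le> (-1) *\<^sub>R Rm.r x + (Km * ph x) *\<^sub>R u" by (simp add: add.commute)
    qed
    have powm: "\<forall>n. \<exists>K. \<forall>x\<ge>0. -((K * ph x) *\<^sub>R u) \<le> (sm ^^ n) x"
    proof
      fix n
      show "\<exists>K. \<forall>x\<ge>0. -((K * ph x) *\<^sub>R u) \<le> (sm ^^ n) x" unfolding sm_def
        by (rule pow_from_pos[OF Rm.r_linear lph lps phpos u_pos \<epsilon>0 vu vM psb _ dm posm]) (use em in simp)
    qed
    have "op_succeq (tensor u \<phi>) Rm.R"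
      by (rule succ_tensor_intro[where t = Rm.r and ph = ph and K = Km]) (use Rm.R_pair tp phpos u_pos Kmb in auto)
    moreover have "op_succeq (tensor u \<phi>) (\<lambda>f. ((-1::real) ^ (n - 1)) *\<^sub>R (Rm.R ^^ n) f)" if n: "n \<ge> 1" for n
    proof -
      obtain K where K: "\<forall>x\<ge>0. -((K * ph x) *\<^sub>R u) \<le> (sm ^^ n) x" using powm by blast
      have sme: "sm = (\<lambda>x. - Rm.r x)" unfolding sm_def by simp
      have smn: "(sm ^^ n) x = ((-1::real) ^ n) *\<^sub>R (Rm.r ^^ n) x" for x unfolding sme by (rule neg_funpow[OF Rm.r_linear])
      have sgn: "((-1::real) ^ (n - 1)) = - ((-1) ^ n)" using n by (cases n) auto
      have bnd: "\<forall>x\<ge>0. ((-1::real) ^ (n - 1)) *\<^sub>R (Rm.r ^^ n) x \<le> (K * ph x) *\<^sub>R u"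
      proof (intro allI impI)
        fix x :: 'a assume x: "0 \<le> x"
        have "-((K * ph x) *\<^sub>R u) \<le> ((-1::real) ^ n) *\<^sub>R (Rm.r ^^ n) x" using K x smn by simp
        then show "((-1::real) ^ (n - 1)) *\<^sub>R (Rm.r ^^ n) x \<le> (K * ph x) *\<^sub>R u" unfolding sgn
          by (simp add: minus_le_iff)
      qed
      show ?thesis
        by (rule succ_tensor_intro[where t = "\<lambda>x. ((-1::real) ^ (n - 1)) *\<^sub>R (Rm.r ^^ n) x" and ph = ph and K = K])
          (use Rm.R_pow_pair tp phpos u_pos bnd in auto)
    qed
    ultimately show "op_succeq (tensor u \<phi>) Rm.R \<and>
        (\<forall>n\<ge>1. op_succeq (tensor u \<phi>) (\<lambda>f. ((-1::real) ^ (n - 1)) *\<^sub>R (Rm.R ^^ n) f))"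
      by blast
  qed
  show ?thesis using partA partB by blast
qed


end
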